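(* Let $n\mid(q+1)$, let $r\ge1$ and $\delta\ge2$ be integers with $\delta$ even and $(r+\delta-1)\mid n$, and put $\nu=n/(r+\delta-1)$, $B=\{\alpha^{j}:-\tfrac{\delta-2}{2}\le j\le\tfrac{\delta-2}{2}\}$. Let $i\in\{0,1,\dots,\lfloor\frac{r-1}{2}\rfloor\}$. (1) For $\ell\in\{0,1,\dots,\lfloor\frac{\nu-2}{2}\rfloor\}$, let $A=\{\alpha^{j}:|j|\le \ell(r+\delta-1)+i\}\cup\{\alpha^{(\ell+e)(r+\delta-1)}:e=1,\dots,\nu-2\ell-1\}$. Then $C_{AB}$ is an optimal cyclic $(r,\delta)$-LRC over $\mathbb{F}_q$ with dimension $(\nu-2\ell)r-2i$ and minimum distance $\delta+2i+2\ell(r+\delta-1)$. (2) If $r+\delta-1$ is even, for $\ell\in\{0,1,\dots,\lfloor\frac{\nu-3}{2}\rfloor\}$ let $A=\{\alpha^{j}:|j|\le \frac{2\ell+1}{2}(r+\delta-1)+i\}\cup\{\alpha^{\frac{2\ell+1+2e}{2}(r+\delta-1)}:e=1,\dots,\nu-2\ell-2\}$. Then $C_{AB}$ is an optimal cyclic $(r,\delta)$-LRC over $\mathbb{F}_q$ with dimension $(\nu-2\ell-1)r-2i$ and minimum distance $\delta+2i+(2\ell+1)(r+\delta-1)$. (3) If $\nu$ is odd, for $\ell\in\{1,2,\dots,\frac{\nu-3}{2}\}$ let $A=\{\alpha^{j}:(\frac{\nu-1}{2}-\ell)(r+\delta-1)-i\le j\le(\frac{\nu+1}{2}+\ell)(r+\delta-1)+i\}\cup\{\alpha^{(\frac{\nu+1}{2}+\ell+e)(r+\delta-1)}:e=1,\dots,\nu-2\ell-2\}$.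 Then $C_{AB}$ is an optimal cyclic $(r,\delta)$-LRC over $\mathbb{F}_q$ with dimension $(\nu-2\ell-1)r-2i$ and minimum distance $\delta+2i+(2\ell+1)(r+\delta-1)$.
   Context: Let $q$ be a prime power and $n\mid(q+1)$, so the set $R_n$ of all $n$-th roots of unity lies in $\mathbb{F}_{q^2}$; let $\alpha\in\mathbb{F}_{q^2}$ be a primitive $n$-th root of unity; exponents of $\alpha$ are read modulo $n$. For $A,B\subseteq R_n$, $AB=\{\beta\gamma:\beta\in A,\gamma\in B\}$. For $Z\subseteq R_n$ such that $\{j:\alpha^j\in Z\}$ is closed under $j\mapsto -j\bmod n$ (equivalently a union of $q$-cyclotomic cosets modulo $n$), $C_Z$ denotes the cyclic code of length $n$ over $\mathbb{F}_q$ generated by $\prod_{\beta\in Z}(x-\beta)\in\mathbb{F}_q[x]$ in $\mathbb{F}_q[x]/(x^n-1)$ (dimension $n-|Z|$). Locality: for a linear code $C\subseteq\mathbb{F}_q^n$ and integers $r\ge1$, $\delta\ge2$, the $i$-th coordinate has $(r,\delta)$-locality if there is $S_i\subseteq\{1,\dots,n\}$ with $i\in S_i$, $|S_i|\le r+\delta-1$ such that the punctured code $C|_{S_i}$ has minimum distance at least $\delta$; $C$ is an $(r,\delta)$-LRC if every coordinate has $(r,\delta)$-locality. An $[n,k,d]$ $(r,\delta)$-LRC is optimal if $d=n-k-(\lceil k/r\rceil-1)(\delta-1)+1$ (always an upper bound on $d$). *)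

theory Defs
  imports Main "HOL-Computational_Algebra.Polynomial"
begin

text \<open>The ambient field 'a plays the role of F_{q^2} (CARD('a) = q^2);
  F_q is its subfield of elements fixed by x \<mapsto> x^q.
  Vectors of length n are functions nat \<Rightarrow> 'a, coordinates 0..n-1 (zero outside).\<close>

definition Fq :: "nat \<Rightarrow> 'a::field set" where
  "Fq q = {x. x ^ q = x}"

definition prime_power :: "nat \<Rightarrow> bool" where
  "prime_power q \<longleftrightarrow> (\<exists>p m. prime p \<and> m \<ge> 1 \<and> q = p ^ m)"

definition setmult :: "'a::times set \<Rightarrow> 'a set \<Rightarrow> 'a set" where
  "setmult A B = {b * c | b c. b \<in> A \<and> c \<in> B}"

definition gen_poly :: "'a::field set \<Rightarrow> 'a poly" where
  "gen_poly Z = (\<Prod>\<beta>\<in>Z. [:- \<beta>, 1:])"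

definition cyclic_code :: "nat \<Rightarrow> nat \<Rightarrow> 'a::field set \<Rightarrow> (nat \<Rightarrow> 'a) set" where
  "cyclic_code q n Z =
     {c. \<exists>m. (\<forall>j. coeff m j \<in> Fq q) \<and>
             c = (\<lambda>j. if j < n then coeff ((m * gen_poly Z) mod (monom 1 n - 1)) j else 0)}"

definition linear_code_Fq :: "nat \<Rightarrow> nat \<Rightarrow> (nat \<Rightarrow> 'a::field) set \<Rightarrow> bool" where
  "linear_code_Fq q n C \<longleftrightarrow>
     (\<forall>c\<in>C. \<forall>j. c j \<in> Fq q \<and> (j \<ge> n \<longrightarrow> c j = 0)) \<and>
     (\<lambda>_. 0) \<in> C \<and>
     (\<forall>c\<in>C. \<forall>c'\<in>C. (\<lambda>j. c j + c' j) \<in> C) \<and>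
     (\<forall>a\<in>Fq q. \<forall>c\<in>C. (\<lambda>j. a * c j) \<in> C)"

definition code_dim :: "nat \<Rightarrow> (nat \<Rightarrow> 'a) set \<Rightarrow> nat \<Rightarrow> bool" where
  "code_dim q C k \<longleftrightarrow> card C = q ^ k"

definition hweight :: "nat \<Rightarrow> (nat \<Rightarrow> 'a::zero) \<Rightarrow> nat" where
  "hweight n c = card {j. j < n \<and> c j \<noteq> 0}"

definition min_dist :: "nat \<Rightarrow> (nat \<Rightarrow> 'a::zero) set \<Rightarrow> nat" where
  "min_dist n C = Min (hweight n ` (C - {\<lambda>_. 0}))"

definition punctured :: "nat set \<Rightarrow> (nat \<Rightarrow> 'a::zero) set \<Rightarrow> (nat \<Rightarrow> 'a) set" where
  "punctured S C = (\<lambda>c j. if j \<in> S then c j else 0) ` C"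

definition dist_at_least :: "nat \<Rightarrow> (nat \<Rightarrow> 'a::zero) set \<Rightarrow> nat \<Rightarrow> bool" where
  "dist_at_least n C d \<longleftrightarrow> (\<forall>c\<in>C. c \<noteq> (\<lambda>_. 0) \<longrightarrow> hweight n c \<ge> d)"

definition is_LRC :: "nat \<Rightarrow> nat \<Rightarrow> nat \<Rightarrow> (nat \<Rightarrow> 'a::zero) set \<Rightarrow> bool" where
  "is_LRC n r \<delta> C \<longleftrightarrow>
     (\<forall>i<n. \<exists>S. S \<subseteq> {..<n} \<and> i \<in> S \<and> card S \<le> r + \<delta> - 1 \<and>
              dist_at_least n (punctured S C) \<delta>)"

definition optimal_LRC ::
  "nat \<Rightarrow> nat \<Rightarrow> nat \<Rightarrow> nat \<Rightarrow> (nat \<Rightarrow> 'a::field) set \<Rightarrow> nat \<Rightarrow> nat \<Rightarrow> bool" where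
  "optimal_LRC q n r \<delta> C k d \<longleftrightarrow>
     linear_code_Fq q n C \<and> code_dim q C k \<and> min_dist n C = d \<and> is_LRC n r \<delta> C \<and>
     int d = int n - int k - (\<lceil>real k / real r\<rceil> - 1) * (int \<delta> - 1) + 1"

end

theory Submission imports Defs "HOL-Computational_Algebra.Primes" "HOL-Library.FuncSet" begin

lemma CHAR_dvd_CARD2: "CHAR('a::{ring_1,finite}) dvd card (UNIV :: 'a set)"
proof -
  have "(\<Sum>x\<in>(UNIV::'a set). x + 1) = (\<Sum>x\<in>(UNIV::'a set). x)"
    by (rule sum.reindex_bij_witness[of _ "\<lambda>x. x - 1" "\<lambda>x. x + 1"]) auto
  hence "of_nat (card (UNIV :: 'a set)) = (0::'a)" by (simp add: sum.distrib)
  thus ?thesis by (simp add: of_nat_eq_0_iff_char_dvd)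
qed

lemma power_card_eq_same:
  fixes x :: "'a :: {field,finite}"
  shows   "x ^ card (UNIV :: 'a set) = x"
proof (cases "x = 0")
  case False
  have "x * (\<Prod>y\<in>UNIV-{0}. x * y) = x * x ^ (card (UNIV :: 'a set) - 1) * \<Prod>(UNIV-{0})"
    by (simp add: prod.distrib mult_ac)
  also have "x * x ^ (card (UNIV :: 'a set) - 1) = x ^ Suc (card (UNIV :: 'a set) - 1)"
    by (subst power_Suc) auto
  also have "Suc (card (UNIV :: 'a set) - 1) = card (UNIV :: 'a set)"
    using finite_UNIV_card_ge_0[where ?'a = 'a] by simp
  also have "(\<Prod>y\<in>UNIV-{0}. x * y) = (\<Prod>y\<in>UNIV-{0}. y)"
    by (rule prod.reindex_bij_witness[of _ "\<lambda>y. y / x" "\<lambda>y. x * y"]) (use False in auto)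
  finally show ?thesis
    by simp
qed (use finite_UNIV_card_ge_0[where ?'a = 'a] in auto)


lemma vander_zero:
  fixes x y :: "nat \<Rightarrow> 'a::field"
  assumes T: "finite T" and inj: "inj_on x T"
    and sums: "\<And>t. t < card T \<Longrightarrow> (\<Sum>s\<in>T. y s * x s ^ t) = 0"
    and s0: "s0 \<in> T"
  shows "y s0 = 0"
proof -
  define p where "p = (\<Prod>s\<in>T - {s0}. [:- x s, 1:])"
  have degp: "degree p = card T - 1"
    unfolding p_def using T s0 by (subst degree_prod_eq_sum_degree) auto
  have zero: "poly p (x s) = 0" if "s \<in> T - {s0}" for s
    unfolding p_def poly_prod using T that by (intro prod_zero) auto
  have nz: "poly p (x s0) \<noteq> 0"
    unfolding p_def poly_prod using T inj s0
    by (subst prod_zero_iff) (auto simp: inj_on_def)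
  have "(\<Sum>s\<in>T. y s * poly p (x s)) = (\<Sum>s\<in>T. y s * (\<Sum>i\<le>degree p. coeff p i * x s ^ i))"
    by (simp add: poly_altdef)
  also have "\<dots> = (\<Sum>i\<le>degree p. coeff p i * (\<Sum>s\<in>T. y s * x s ^ i))"
    by (simp add: sum_distrib_left sum_distrib_right mult_ac sum.swap[of _ T])
  also have "\<dots> = 0"
  proof (rule sum.neutral, rule ballI)
    fix i assume "i \<in> {..degree p}"
    hence "i < card T" using degp s0 T by (cases "card T") (auto simp: card_gt_0_iff)
    thus "coeff p i * (\<Sum>s\<in>T. y s * x s ^ i) = 0" using sums by simp
  qed
  finally have "(\<Sum>s\<in>T. y s * poly p (x s)) = 0" .
  moreover have "(\<Sum>s\<in>T. y s * poly p (x s)) = y s0 * poly p (x s0)"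
    using T s0 zero by (subst sum.remove[of T s0]) (auto intro!: sum.neutral)
  ultimately show ?thesis using nz by simp
qed

lemma bch_weight:
  fixes x y :: "nat \<Rightarrow> 'a::field"
  assumes inj: "inj_on x {..<N}"
    and sums: "\<And>t. t < D - 1 \<Longrightarrow> (\<Sum>s<N. y s * x s ^ t) = 0"
    and ex: "\<exists>s<N. y s \<noteq> 0"
  shows "card {s. s < N \<and> y s \<noteq> 0} \<ge> D"
proof (rule ccontr)
  define T where "T = {s. s < N \<and> y s \<noteq> 0}"
  assume "\<not> card {s. s < N \<and> y s \<noteq> 0} \<ge> D"
  hence cT: "card T < D" by (simp add: T_def)
  have fT: "finite T" by (simp add: T_def)
  have sub: "T \<subseteq> {..<N}" by (auto simp: T_def)
  obtain s0 where s0: "s0 \<in> T" using ex by (auto simp: T_def)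
  have "y s0 = 0"
  proof (rule vander_zero[OF fT _ _ s0])
    show "inj_on x T" using inj sub by (rule inj_on_subset)
    fix t assume "t < card T"
    hence "t < D - 1" using cT by linarith
    hence "(\<Sum>s<N. y s * x s ^ t) = 0" by (rule sums)
    moreover have "(\<Sum>s<N. y s * x s ^ t) = (\<Sum>s\<in>T. y s * x s ^ t)"
      by (rule sum.mono_neutral_right) (auto simp: T_def)
    ultimately show "(\<Sum>s\<in>T. y s * x s ^ t) = 0" by simp
  qed
  thus False using s0 by (simp add: T_def)
qed

lemma poly_sum_lessN:
  fixes R :: "'a::field poly"
  assumes "degree R < N \<or> R = 0"
  shows "poly R x = (\<Sum>j<N. coeff R j * x ^ j)"
proof (cases "R = 0")
  case True thus ?thesis by simp
next
  case False
  hence d: "degree R < N" using assms by simp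
  have "poly R x = (\<Sum>j\<le>degree R. coeff R j * x ^ j)" by (rule poly_altdef)
  also have "\<dots> = (\<Sum>j<N. coeff R j * x ^ j)"
    using d by (intro sum.mono_neutral_left) (auto simp: coeff_eq_0)
  finally show ?thesis .
qed

lemma sum_split_mod:
  fixes f :: "nat \<Rightarrow> 'a::comm_monoid_add"
  shows "(\<Sum>j<nu * mm. f j) = (\<Sum>a<nu. \<Sum>s<mm. f (a + nu * s))"
proof -
  define h where "h = (\<lambda>z::nat \<times> nat. fst z + nu * snd z)"
  have inj: "inj_on h ({..<nu} \<times> {..<mm})"
  proof (rule inj_onI)
    fix z z' assume z: "z \<in> {..<nu} \<times> {..<mm}" "z' \<in> {..<nu} \<times> {..<mm}" "h z = h z'"
    have "h z mod nu = fst z" using z(1) by (cases z) (simp add: h_def)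
    moreover have "h z' mod nu = fst z'" using z(2) by (cases z') (simp add: h_def)
    ultimately have 1: "fst z = fst z'" using z by simp
    hence "nu * snd z = nu * snd z'" using z(3) by (simp add: h_def)
    moreover have "nu > 0" using z by auto
    ultimately have "snd z = snd z'" by simp
    thus "z = z'" using 1 by (simp add: prod_eq_iff)
  qed
  have img: "h ` ({..<nu} \<times> {..<mm}) = {..<nu * mm}"
  proof (intro equalityI subsetI)
    fix j assume "j \<in> h ` ({..<nu} \<times> {..<mm})"
    then obtain a s where z: "j = a + nu * s" "a < nu" "s < mm" by (auto simp: h_def)
    have "a + nu * s < nu + nu * s" using z by simp
    also have "\<dots> = nu * (s + 1)" by (simp add: algebra_simps)
    also have "\<dots> \<le> nu * mm" using z by (intro mult_le_mono2) simp
    finally show "j \<in> {..<nu * mm}" using z by simp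
  next
    fix j assume j: "j \<in> {..<nu * mm}"
    hence "nu > 0" by (cases nu) auto
    moreover have "j div nu < mm" using j by (intro less_mult_imp_div_less) (simp add: mult.commute)
    ultimately have "(j mod nu, j div nu) \<in> {..<nu} \<times> {..<mm}" by simp
    moreover have "h (j mod nu, j div nu) = j" by (simp add: h_def)
    ultimately show "j \<in> h ` ({..<nu} \<times> {..<mm})" by (metis imageI)
  qed
  have "(\<Sum>j<nu * mm. f j) = (\<Sum>z\<in>{..<nu} \<times> {..<mm}. f (h z))"
    using sum.reindex[OF inj, of f] img by simp
  also have "\<dots> = (\<Sum>a<nu. \<Sum>s<mm. f (a + nu * s))"
    unfolding sum.cartesian_product by (simp add: h_def case_prod_beta)
  finally show ?thesis .
qed

locale fqs =
  fixes q :: nat and n :: nat and \<alpha> :: "'a::{field,finite}"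
  assumes q: "prime_power q" and card: "card (UNIV :: 'a set) = q ^ 2"
    and ndvd: "n dvd q + 1"
    and prim1: "\<alpha> ^ n = 1" and prim2: "\<forall>k. 0 < k \<and> k < n \<longrightarrow> \<alpha> ^ k \<noteq> 1"
begin

lemma q_char: "\<exists>a. q = CHAR('a) ^ a"
proof -
  obtain p a where pa: "prime p" "a \<ge> 1" "q = p ^ a" using q unfolding prime_power_def by blast
  have cp: "CHAR('a) > 0" by (simp add: finite_imp_CHAR_pos)
  have pr: "prime CHAR('a)" using cp prime_CHAR_semidom by blast
  have "CHAR('a) dvd p ^ (a*2)" using CHAR_dvd_CARD2[where 'a='a] card pa by (simp add: power_mult)
  hence "CHAR('a) dvd p" using pr prime_dvd_power by blast
  hence "CHAR('a) = p" using pr pa primes_dvd_imp_eq by blast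
  thus ?thesis using pa by blast
qed

lemma char_prime: "prime CHAR('a)"
proof -
  have cp: "CHAR('a) > 0" by (simp add: finite_imp_CHAR_pos)
  thus ?thesis using prime_CHAR_semidom by blast
qed

lemma q_ge2: "q \<ge> 2"
proof -
  obtain p a where pa: "prime p" "a \<ge> 1" "q = p ^ a" using q unfolding prime_power_def by blast
  have "p ^ 1 \<le> p ^ a" using pa prime_gt_0_nat[OF pa(1)] by (intro power_increasing) auto
  thus ?thesis using pa prime_ge_2_nat[of p] by simp
qed

lemma frob_add: "(x + y :: 'a) ^ q = x ^ q + y ^ q"
  using q_char char_prime freshmans_dream' by blast

lemma frob_sum: "(sum f A :: 'a) ^ q = sum (\<lambda>i. f i ^ q) A"
  using q_char char_prime freshmans_dream_sum' by blast

lemma frob_minus: "(- x :: 'a) ^ q = - (x ^ q)"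
proof -
  have "(x + - x) ^ q = x ^ q + (-x) ^ q" by (rule frob_add)
  moreover have "(x + - x) ^ q = 0" using q_ge2 by simp
  ultimately have "x ^ q + (-x) ^ q = 0" by simp
  thus ?thesis by (simp add: eq_neg_iff_add_eq_0 add.commute)
qed

lemma frob_diff: "(x - y :: 'a) ^ q = x ^ q - y ^ q"
  using frob_add[of x "-y"] frob_minus[of y] by simp

lemma Fq_0: "0 \<in> (Fq q :: 'a set)" using q_ge2 by (simp add: Fq_def)
lemma Fq_1: "1 \<in> (Fq q :: 'a set)" by (simp add: Fq_def)
lemma Fq_add: "x \<in> Fq q \<Longrightarrow> y \<in> Fq q \<Longrightarrow> (x + y :: 'a) \<in> Fq q"
  by (simp add: Fq_def frob_add)
lemma Fq_minus: "x \<in> Fq q \<Longrightarrow> (- x :: 'a) \<in> Fq q"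
  by (simp add: Fq_def frob_minus)
lemma Fq_diff: "x \<in> Fq q \<Longrightarrow> y \<in> Fq q \<Longrightarrow> (x - y :: 'a) \<in> Fq q"
  by (simp add: Fq_def frob_diff)
lemma Fq_mult: "x \<in> Fq q \<Longrightarrow> y \<in> Fq q \<Longrightarrow> (x * y :: 'a) \<in> Fq q"
  by (simp add: Fq_def power_mult_distrib)
lemma Fq_inverse: "x \<in> Fq q \<Longrightarrow> (inverse x :: 'a) \<in> Fq q"
  by (simp add: Fq_def power_inverse)
lemma Fq_divide: "x \<in> Fq q \<Longrightarrow> y \<in> Fq q \<Longrightarrow> (x / y :: 'a) \<in> Fq q"
  by (simp add: Fq_def power_divide)
lemma Fq_sum: "(\<And>i. i \<in> A \<Longrightarrow> f i \<in> Fq q) \<Longrightarrow> (sum f A :: 'a) \<in> Fq q"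
  by (induction A rule: infinite_finite_induct) (auto intro: Fq_0 Fq_add)

lemma q_pos: "0 < q" using q_ge2 by simp

lemma power_qq: "(x::'a) ^ (q * q) = x"
  using power_card_eq_same[of x] card by (simp add: power2_eq_square)

lemma card_Fq_le: "card (Fq q :: 'a set) \<le> q"
proof -
  let ?p = "monom (1::'a) q + [:0, -1:]"
  have deg: "degree ?p = q" using q_ge2 by (simp add: degree_add_eq_left degree_monom_eq)
  hence nz: "?p \<noteq> 0" using q_ge2 by auto
  have "Fq q = {x::'a. poly ?p x = 0}" by (auto simp: Fq_def poly_monom)
  thus ?thesis using card_poly_roots_bound[OF nz] deg by simp
qed

lemma card_Fq_ge: "card (Fq q :: 'a set) \<ge> q"
proof -
  define f where "f = (\<lambda>x::'a. x ^ q - x)"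
  let ?p = "monom (1::'a) q + [:0, 1:]"
  have deg: "degree ?p = q" using q_ge2 by (simp add: degree_add_eq_left degree_monom_eq)
  hence nz: "?p \<noteq> 0" using q_ge2 by auto
  have im: "f ` UNIV \<subseteq> {x. poly ?p x = 0}"
  proof
    fix y assume "y \<in> f ` UNIV"
    then obtain x where yx: "y = f x" by blast
    have "y ^ q = (x ^ q) ^ q - x ^ q" unfolding yx f_def by (rule frob_diff)
    also have "(x ^ q) ^ q = x" using power_qq[of x] by (simp add: power_mult)
    finally have "y ^ q + y = 0" unfolding yx f_def by simp
    thus "y \<in> {x. poly ?p x = 0}" by (simp add: poly_monom)
  qed
  have cim: "card (f ` UNIV) \<le> q"
    using card_mono[OF poly_roots_finite[OF nz] im] card_poly_roots_bound[OF nz] deg by simp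
  have fib: "card (f -` {y}) = card (Fq q :: 'a set)" if "y \<in> f ` UNIV" for y
  proof -
    obtain x0 where y: "y = f x0" using \<open>y \<in> f ` UNIV\<close> by blast
    have "f -` {y} = (\<lambda>z. x0 + z) ` (Fq q :: 'a set)"
    proof (intro equalityI subsetI)
      fix x assume "x \<in> f -` {y}"
      hence "f x = f x0" using y by simp
      hence "x ^ q - x = x0 ^ q - x0" by (simp add: f_def)
      hence "x ^ q - x0 ^ q = x - x0" by (simp add: algebra_simps)
      hence "(x - x0) ^ q = x - x0" by (simp add: frob_diff)
      hence "x - x0 \<in> Fq q" by (simp add: Fq_def)
      thus "x \<in> (\<lambda>z. x0 + z) ` (Fq q :: 'a set)" by (intro image_eqI[of _ _ "x - x0"]) auto
    next
      fix x assume "x \<in> (\<lambda>z. x0 + z) ` (Fq q :: 'a set)"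
      then obtain z where z: "z \<in> Fq q" "x = x0 + z" by blast
      have "f x = f x0" using z by (simp add: f_def frob_add Fq_def)
      thus "x \<in> f -` {y}" using y by simp
    qed
    thus ?thesis by (simp add: card_image)
  qed
  have "UNIV = (\<Union>y\<in>f ` UNIV. f -` {y})" by auto
  hence "card (UNIV::'a set) = card (\<Union>y\<in>f ` UNIV. f -` {y})" by simp
  also have "\<dots> = (\<Sum>y\<in>f ` UNIV. card (f -` {y}))"
    by (rule card_UN_disjoint) auto
  also have "\<dots> = card (f ` UNIV) * card (Fq q :: 'a set)" using fib by simp
  finally have "q * q = card (f ` UNIV) * card (Fq q :: 'a set)"
    using card by (simp add: power2_eq_square)
  also have "\<dots> \<le> q * card (Fq q :: 'a set)" using cim by (rule mult_le_mono1)
  finally show ?thesis using q_ge2 by simp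
qed

lemma card_Fq: "card (Fq q :: 'a set) = q"
  using card_Fq_le card_Fq_ge by simp

definition inFq :: "'a poly \<Rightarrow> bool" where
  "inFq p \<longleftrightarrow> (\<forall>j. coeff p j \<in> Fq q)"

lemma inFq_0: "inFq 0" by (simp add: inFq_def Fq_0)
lemma inFq_1: "inFq 1" by (simp add: inFq_def Fq_0 Fq_1)
lemma inFq_add: "inFq p \<Longrightarrow> inFq p' \<Longrightarrow> inFq (p + p')"
  by (simp add: inFq_def Fq_add)
lemma inFq_diff: "inFq p \<Longrightarrow> inFq p' \<Longrightarrow> inFq (p - p')"
  by (simp add: inFq_def Fq_diff)
lemma inFq_smult: "c \<in> Fq q \<Longrightarrow> inFq p \<Longrightarrow> inFq (smult c p)"
  by (simp add: inFq_def Fq_mult)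
lemma inFq_monom: "c \<in> Fq q \<Longrightarrow> inFq (monom c k)"
  by (simp add: inFq_def Fq_0)
lemma inFq_mult: "inFq p \<Longrightarrow> inFq p' \<Longrightarrow> inFq (p * p')"
  unfolding inFq_def coeff_mult by (auto intro!: Fq_sum Fq_mult)
lemma inFq_sum: "(\<And>i. i \<in> A \<Longrightarrow> inFq (f i)) \<Longrightarrow> inFq (sum f A)"
  unfolding inFq_def coeff_sum by (auto intro!: Fq_sum)

lemma inFq_mod:
  assumes "inFq P" "inFq Q" "Q \<noteq> 0"
  shows "inFq (P mod Q)"
  using assms(1)
proof (induction "degree P" arbitrary: P rule: less_induct)
  case less
  show ?case
  proof (cases "degree P < degree Q")
    case True thus ?thesis by (simp add: mod_poly_less[OF True] less.prems)
  next
    case False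
    define d where "d = degree P - degree Q"
    define c where "c = lead_coeff P / lead_coeff Q"
    define P' where "P' = P - smult c (monom 1 d * Q)"
    have PP: "P = P' + smult c (monom 1 d) * Q" by (simp add: P'_def)
    have modeq: "P mod Q = P' mod Q" by (subst PP) (rule mod_mult_self1)
    have c: "c \<in> Fq q" unfolding c_def using less.prems assms(2)
      by (auto simp: inFq_def intro!: Fq_divide)
    have P': "inFq P'" unfolding P'_def
      by (intro inFq_diff inFq_smult inFq_mult inFq_monom less.prems assms(2) c Fq_1)
    show ?thesis
    proof (cases "P' = 0")
      case True thus ?thesis using modeq inFq_0 by simp
    next
      case False
      have dd: "d + degree Q = degree P" using \<open>\<not> degree P < degree Q\<close> by (simp add: d_def)
      have dl: "degree (smult c (monom 1 d * Q)) \<le> degree P"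
        using degree_smult_le[of c "monom 1 d * Q"] degree_mult_le[of "monom 1 d" Q]
          degree_monom_le[of "1::'a" d] dd by linarith
      have "degree P' \<le> degree P" unfolding P'_def using dl by (rule degree_diff_le[OF order_refl])
      moreover have "coeff P' (degree P) = 0"
        using \<open>\<not> degree P < degree Q\<close> assms(3)
        by (simp add: P'_def c_def d_def coeff_monom_mult)
      ultimately have "degree P' < degree P" using False
        using leading_coeff_0_iff[of P'] by (cases "degree P' = degree P") auto
      from less.hyps[OF this P'] show ?thesis using modeq by simp
    qed
  qed
qed

definition frobp :: "'a poly \<Rightarrow> 'a poly" where
  "frobp p = map_poly (\<lambda>x. x ^ q) p"

lemma coeff_frobp: "coeff (frobp p) j = coeff p j ^ q"
  unfolding frobp_def using q_pos by (simp add: coeff_map_poly)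

lemma frobp_mult: "frobp (p * p') = frobp p * frobp p'"
  by (rule poly_eqI) (simp add: coeff_frobp coeff_mult frob_sum power_mult_distrib)

lemma frobp_1: "frobp 1 = 1"
  by (rule poly_eqI) (simp add: coeff_frobp q_pos)

lemma frobp_prod: "frobp (prod f A) = (\<Prod>i\<in>A. frobp (f i))"
  by (induction A rule: infinite_finite_induct) (simp_all add: frobp_1 frobp_mult)

lemma frobp_lin: "frobp [:-b, 1:] = [:-(b ^ q), 1:]"
  by (rule poly_eqI) (auto simp: coeff_frobp coeff_pCons frob_minus q_pos split: nat.splits)

lemma frob_inj: "inj (\<lambda>x::'a. x ^ q)"
proof (rule injI)
  fix x y :: 'a assume "x ^ q = y ^ q"
  hence "(x ^ q) ^ q = (y ^ q) ^ q" by simp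
  thus "x = y" using power_qq[of x] power_qq[of y] by (simp add: power_mult)
qed

lemma gen_poly_inFq:
  assumes Z: "finite Z" "\<And>b. b \<in> Z \<Longrightarrow> b ^ q \<in> Z"
  shows "inFq (gen_poly Z)"
proof -
  let ?f = "\<lambda>x::'a. x ^ q"
  have inj: "inj_on ?f Z" using frob_inj by (rule inj_on_subset) simp
  have sub: "?f ` Z \<subseteq> Z" using Z by auto
  have eq: "?f ` Z = Z" by (rule card_subset_eq[OF Z(1) sub]) (simp add: card_image[OF inj])
  have "frobp (gen_poly Z) = (\<Prod>b\<in>Z. [:-(?f b), 1:])"
    by (simp add: gen_poly_def frobp_prod frobp_lin)
  also have "\<dots> = (\<Prod>b\<in>?f ` Z. [:-b, 1:])" by (simp add: prod.reindex[OF inj])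
  also have "\<dots> = gen_poly Z" by (simp add: eq gen_poly_def)
  finally have "frobp (gen_poly Z) = gen_poly Z" .
  hence "coeff (gen_poly Z) j ^ q = coeff (gen_poly Z) j" for j
    using coeff_frobp[of "gen_poly Z" j] by simp
  thus ?thesis unfolding inFq_def Fq_def by simp
qed

lemma gen_poly_degree: "finite Z \<Longrightarrow> degree (gen_poly Z) = card Z"
  unfolding gen_poly_def by (subst degree_prod_eq_sum_degree) auto

lemma gen_poly_lead: "lead_coeff (gen_poly Z) = 1"
  unfolding gen_poly_def by (simp add: lead_coeff_prod)

lemma gen_poly_nz: "gen_poly Z \<noteq> 0"
  using gen_poly_lead[of Z] by auto

lemma gen_poly_root: "finite Z \<Longrightarrow> b \<in> Z \<Longrightarrow> poly (gen_poly Z) b = 0"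
  unfolding gen_poly_def poly_prod by (rule prod_zero) auto

abbreviation E :: "int \<Rightarrow> 'a" where "E j \<equiv> \<alpha> powi j"

lemma n_pos: "n > 0"
proof (rule ccontr)
  assume "\<not> n > 0" hence "n = 0" by simp
  thus False using ndvd by simp
qed

lemma alpha_nz: "\<alpha> \<noteq> 0"
proof
  assume "\<alpha> = 0" thus False using prim1 n_pos by (simp add: power_0_left)
qed

lemma E_add: "E (a + b) = E a * E b"
  using alpha_nz by (simp add: power_int_add)

lemma E_nat: "E (int j) = \<alpha> ^ j" by simp

lemma E_nk: "E (int n * k) = 1"
  by (simp add: power_int_mult prim1)

lemma E_mod: "E j = E (j mod int n)"
proof -
  have "E j = E (j mod int n + int n * (j div int n))" by simp
  also have "\<dots> = E (j mod int n)" by (simp only: E_add E_nk) simp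
  finally show ?thesis .
qed

lemma E_nz: "E j \<noteq> 0" using alpha_nz by simp

lemma E_eq_iff: "E a = E b \<longleftrightarrow> a mod int n = b mod int n"
proof
  assume h: "E a = E b"
  define d where "d = (a - b) mod int n"
  have d: "0 \<le> d" "d < int n" using n_pos by (auto simp: d_def)
  have "E (a - b) = E a * E (- b)" using E_add[of a "-b"] by simp
  also have "\<dots> = 1" using h alpha_nz by (simp add: power_int_minus)
  finally have "E d = 1" using E_mod[of "a - b"] by (simp add: d_def)
  moreover have "d = int (nat d)" using d by simp
  ultimately have "\<alpha> ^ nat d = 1" by (metis E_nat)
  moreover have "nat d < n" using d by simp
  ultimately have "nat d = 0"
  proof -
    assume a: "\<alpha> ^ nat d = 1" "nat d < n"
    show "nat d = 0"
    proof (rule ccontr)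
      assume "nat d \<noteq> 0"
      hence "0 < nat d \<and> nat d < n" using a by simp
      hence "\<alpha> ^ nat d \<noteq> 1" using prim2 by blast
      thus False using a by simp
    qed
  qed
  hence "d = 0" using d by simp
  thus "a mod int n = b mod int n" by (simp add: d_def mod_eq_dvd_iff dvd_eq_mod_eq_0)
next
  assume "a mod int n = b mod int n"
  thus "E a = E b" using E_mod[of a] E_mod[of b] by simp
qed

lemma E_pow: "E j ^ k = E (j * int k)"
  by (simp add: power_int_mult)

lemma E_q: "E j ^ q = E (- j)"
proof -
  have "E j ^ q = E (j * int q)" by (rule E_pow)
  also have "\<dots> = E (- j)"
  proof (subst E_eq_iff)
    have "int n dvd int (q + 1)" using ndvd by (simp only: int_dvd_int_iff)
    hence "int n dvd int q + 1" by (simp add: add.commute)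
    hence "int n dvd j * (int q + 1)" by (rule dvd_mult)
    hence "int n dvd j * int q - (- j)" by (simp add: algebra_simps)
    thus "j * int q mod int n = - j mod int n" by (simp add: mod_eq_dvd_iff)
  qed
  finally show ?thesis .
qed

lemma E_pow_n: "E j ^ n = 1"
  using E_pow[of j n] E_nk[of j] by (simp add: mult.commute)

definition Rn :: "'a set" where "Rn = (\<lambda>j. \<alpha> ^ j) ` {..<n}"

lemma E_in_Rn: "E j \<in> Rn"
proof -
  have h: "j mod int n = int (nat (j mod int n))" using n_pos by simp
  have "E j = E (int (nat (j mod int n)))" using E_mod[of j] h by simp
  hence "E j = \<alpha> ^ nat (j mod int n)" by (simp only: E_nat)
  moreover have "nat (j mod int n) < n" using n_pos by (simp add: nat_less_iff)
  ultimately show ?thesis unfolding Rn_def by blast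
qed

lemma Rn_E: "x \<in> Rn \<Longrightarrow> \<exists>j. x = E j"
  unfolding Rn_def by (auto intro: exI[of _ "int j" for j])

lemma Rn_eq: "Rn = range E"
  using E_in_Rn Rn_E by blast

lemma card_Rn: "card Rn = n"
proof -
  have "inj_on (\<lambda>j. \<alpha> ^ j) {..<n}"
  proof (rule inj_onI)
    fix a b assume ab: "a \<in> {..<n}" "b \<in> {..<n}" "\<alpha> ^ a = \<alpha> ^ b"
    hence "E (int a) = E (int b)" by simp
    hence "int a mod int n = int b mod int n" by (simp only: E_eq_iff)
    thus "a = b" using ab by simp
  qed
  thus ?thesis unfolding Rn_def by (simp add: card_image)
qed

lemma finite_Rn: "finite Rn" unfolding Rn_def by simp

lemma Rn_root: "x \<in> Rn \<Longrightarrow> x ^ n = 1"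
  using Rn_E E_pow_n by blast

lemma Xn_gen: "monom 1 n - 1 = gen_poly Rn"
proof (rule poly_eqI_degree_lead_coeff[where n=n and A=Rn])
  show "coeff (monom 1 n - 1) n = coeff (gen_poly Rn) n"
    using n_pos gen_poly_lead[of Rn] gen_poly_degree[OF finite_Rn] card_Rn by simp
  show "n \<le> card Rn" using card_Rn by simp
  show "degree (monom 1 n - 1 :: 'a poly) \<le> n"
    by (rule degree_diff_le) (auto simp: degree_monom_le)
  show "degree (gen_poly Rn) \<le> n" using gen_poly_degree[OF finite_Rn] card_Rn by simp
  fix z assume "z \<in> Rn"
  thus "poly (monom 1 n - 1) z = poly (gen_poly Rn) z"
    using gen_poly_root[OF finite_Rn] Rn_root by (simp add: poly_monom)
qed


end

locale code = fqs +
  fixes Z :: "'a set"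
  assumes Zsub: "Z \<subseteq> Rn" and Zsym: "\<And>b. b \<in> Z \<Longrightarrow> inverse b \<in> Z"
begin

abbreviation "gg \<equiv> gen_poly Z"
abbreviation "hh \<equiv> gen_poly (Rn - Z)"
abbreviation "QQ \<equiv> (monom 1 n - 1 :: 'a poly)"
abbreviation "kk \<equiv> n - card Z"
abbreviation "CC \<equiv> cyclic_code q n Z"

definition vec :: "'a poly \<Rightarrow> nat \<Rightarrow> 'a" where
  "vec R = (\<lambda>j. if j < n then coeff R j else 0)"

lemma Rn_q: "x \<in> Rn \<Longrightarrow> x ^ q = inverse x"
  using Rn_E E_q by (auto simp: power_int_minus)

lemma Rn_inverse: "x \<in> Rn \<Longrightarrow> inverse x \<in> Rn"
  using Rn_E E_in_Rn by (metis power_int_minus)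

lemma finite_Z: "finite Z" using Zsub finite_Rn by (rule finite_subset)

lemma card_Z: "card Z \<le> n" using card_mono[OF finite_Rn Zsub] card_Rn by simp

lemma inFq_g: "inFq gg"
  by (rule gen_poly_inFq[OF finite_Z]) (use Zsub Rn_q Zsym in auto)

lemma inFq_h: "inFq hh"
proof (rule gen_poly_inFq)
  show "finite (Rn - Z)" using finite_Rn by simp
  fix b assume b: "b \<in> Rn - Z"
  hence "b ^ q = inverse b" using Rn_q by simp
  moreover have "inverse b \<in> Rn" using b Rn_inverse by simp
  moreover have "inverse b \<notin> Z" using b Zsym[of "inverse b"] by auto
  ultimately show "b ^ q \<in> Rn - Z" by simp
qed

lemma gh: "hh * gg = QQ"
proof -
  have "QQ = gen_poly Rn" by (rule Xn_gen)
  also have "\<dots> = hh * gg"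
    unfolding gen_poly_def using Zsub finite_Rn by (rule prod.subset_diff)
  finally show ?thesis by simp
qed

lemma inFq_Q: "inFq QQ" by (intro inFq_diff inFq_monom inFq_1 Fq_1)

lemma Q_nz: "QQ \<noteq> 0" and deg_Q: "degree QQ = n"
proof -
  show "degree QQ = n" using gen_poly_degree[OF finite_Rn] card_Rn Xn_gen by simp
  thus "QQ \<noteq> 0" using n_pos by auto
qed

lemma deg_g: "degree gg = card Z" using gen_poly_degree[OF finite_Z] .

lemma deg_h: "degree hh = kk"
  using gen_poly_degree[of "Rn - Z"] finite_Rn card_Diff_subset[OF finite_Z Zsub] card_Rn by simp

lemma C_alt: "CC = {vec (m * gg mod QQ) | m. inFq m}"
  by (auto simp: cyclic_code_def inFq_def vec_def)

lemma deg_mod_Q: "R mod QQ = 0 \<or> degree (R mod QQ) < n"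
  using degree_mod_less[OF Q_nz, of R] deg_Q by simp

lemma C_vals: "c \<in> CC \<Longrightarrow> c j \<in> Fq q"
  unfolding C_alt vec_def using inFq_mod[OF inFq_mult[OF _ inFq_g] inFq_Q Q_nz]
  by (auto simp: inFq_def Fq_0)

lemma C_out: "c \<in> CC \<Longrightarrow> n \<le> j \<Longrightarrow> c j = 0"
  unfolding C_alt vec_def by auto

lemma C_linear: "linear_code_Fq q n CC"
  unfolding linear_code_Fq_def
proof (intro conjI ballI allI impI)
  show "c j \<in> Fq q" if "c \<in> CC" for c j using C_vals that .
  show "c j = 0" if "c \<in> CC" "n \<le> j" for c j using C_out that .
  show "(\<lambda>_. 0) \<in> CC" unfolding C_alt
    by (rule CollectI, rule exI[of _ 0]) (auto simp: vec_def inFq_0)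
  show "(\<lambda>j. c j + c' j) \<in> CC" if cc: "c \<in> CC" "c' \<in> CC" for c c'
  proof -
    obtain m where m: "inFq m" "c = vec (m * gg mod QQ)" using cc(1) C_alt by auto
    obtain m' where m': "inFq m'" "c' = vec (m' * gg mod QQ)" using cc(2) C_alt by auto
    have "(\<lambda>j. c j + c' j) = vec ((m + m') * gg mod QQ)"
      by (simp add: m m' vec_def fun_eq_iff distrib_right poly_mod_add_left)
    thus ?thesis unfolding C_alt using inFq_add[OF m(1) m'(1)] by blast
  qed
  show "(\<lambda>j. a * c j) \<in> CC" if ac: "a \<in> Fq q" "c \<in> CC" for a c
  proof -
    obtain m where m: "inFq m" "c = vec (m * gg mod QQ)" using ac(2) C_alt by auto
    have "(\<lambda>j. a * c j) = vec (smult a m * gg mod QQ)"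
      by (simp add: m vec_def fun_eq_iff mod_smult_left)
    thus ?thesis unfolding C_alt using inFq_smult[OF ac(1) m(1)] by blast
  qed
qed

definition MM :: "'a poly set" where
  "MM = {m. inFq m \<and> (\<forall>j\<ge>kk. coeff m j = 0)}"

lemma card_MM: "card MM = q ^ kk"
proof -
  have bij: "bij_betw (\<lambda>m. restrict (coeff m) {..<kk}) MM (PiE {..<kk} (\<lambda>_. (Fq q :: 'a set)))"
  proof (rule bij_betwI[where g = "\<lambda>f :: nat \<Rightarrow> 'a. \<Sum>j<kk. monom (f j) j"])
    show "(\<lambda>m. restrict (coeff m) {..<kk}) \<in> MM \<rightarrow> (\<Pi>\<^sub>E j\<in>{..<kk}. (Fq q :: 'a set))"
      by (auto simp: MM_def inFq_def)
    show "(\<lambda>f. \<Sum>j<kk. monom (f j) j) \<in> (\<Pi>\<^sub>E j\<in>{..<kk}. (Fq q :: 'a set)) \<rightarrow> MM"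
    proof
      fix f assume f: "f \<in> (\<Pi>\<^sub>E j\<in>{..<kk}. (Fq q :: 'a set))"
      have "inFq (\<Sum>j<kk. monom (f j) j)" using f by (intro inFq_sum inFq_monom) auto
      moreover have "coeff (\<Sum>j<kk. monom (f j) j) i = 0" if "kk \<le> i" for i
        using that by (simp add: coeff_sum)
      ultimately show "(\<Sum>j<kk. monom (f j) j) \<in> MM" by (simp add: MM_def)
    qed
    show "(\<Sum>j<kk. monom (restrict (coeff m) {..<kk} j) j) = m" if "m \<in> MM" for m
    proof (rule poly_eqI)
      fix i
      have "coeff (\<Sum>j<kk. monom (restrict (coeff m) {..<kk} j) j) i = (if i < kk then coeff m i else 0)"
        by (simp add: coeff_sum)
      thus "coeff (\<Sum>j<kk. monom (restrict (coeff m) {..<kk} j) j) i = coeff m i"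
        using that by (auto simp: MM_def)
    qed
    show "restrict (coeff (\<Sum>j<kk. monom (f j) j)) {..<kk} = f" if "f \<in> (\<Pi>\<^sub>E j\<in>{..<kk}. (Fq q :: 'a set))" for f
    proof
      fix i show "restrict (coeff (\<Sum>j<kk. monom (f j) j)) {..<kk} i = f i"
        using that by (cases "i < kk") (auto simp: coeff_sum PiE_def extensional_def)
    qed
  qed
  have "card MM = card (PiE {..<kk} (\<lambda>_. Fq q :: 'a set))" using bij by (rule bij_betw_same_card)
  also have "\<dots> = q ^ kk" by (simp add: card_PiE card_Fq)
  finally show ?thesis .
qed

lemma MM_deg: "m \<in> MM \<Longrightarrow> m * gg = 0 \<or> degree (m * gg) < n"
proof -
  assume m: "m \<in> MM"
  show ?thesis
  proof (cases "m = 0")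
    case False
    have "coeff m (degree m) \<noteq> 0" using False by simp
    hence "degree m < kk" using m by (auto simp: MM_def not_less[symmetric])
    hence "degree (m * gg) < n"
      using degree_mult_eq[OF False gen_poly_nz] deg_g card_Z by simp
    thus ?thesis by simp
  qed simp
qed

lemma MM_mod: "m \<in> MM \<Longrightarrow> m * gg mod QQ = m * gg"
  using MM_deg[of m] deg_Q by (auto intro: mod_poly_less)

lemma C_image: "CC = (\<lambda>m. vec (m * gg)) ` MM"
proof (intro equalityI subsetI)
  fix c assume "c \<in> CC"
  then obtain m where m: "inFq m" "c = vec (m * gg mod QQ)" using C_alt by auto
  define m0 where "m0 = m mod hh"
  have hnz: "hh \<noteq> 0" by (rule gen_poly_nz)
  have m0: "m0 \<in> MM"
  proof -
    have "inFq m0" unfolding m0_def by (rule inFq_mod[OF m(1) inFq_h hnz])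
    moreover have "coeff m0 j = 0" if "kk \<le> j" for j
      using degree_mod_less[OF hnz, of m] that deg_h by (auto simp: m0_def coeff_eq_0)
    ultimately show ?thesis by (simp add: MM_def)
  qed
  have "m * gg = ((m div hh) * hh + m0) * gg" by (simp add: m0_def)
  also have "\<dots> = m0 * gg + (m div hh) * QQ" by (simp add: gh[symmetric] algebra_simps)
  finally have "m * gg = m0 * gg + (m div hh) * QQ" .
  hence "m * gg mod QQ = m0 * gg mod QQ" by simp
  also have "\<dots> = m0 * gg" by (rule MM_mod[OF m0])
  finally show "c \<in> (\<lambda>m. vec (m * gg)) ` MM" using m m0 by auto
next
  fix c assume "c \<in> (\<lambda>m. vec (m * gg)) ` MM"
  then obtain m where m: "m \<in> MM" "c = vec (m * gg)" by auto
  have "inFq m" using m by (simp add: MM_def)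
  moreover have "c = vec (m * gg mod QQ)" using m MM_mod[OF m(1)] by simp
  ultimately show "c \<in> CC" unfolding C_alt by blast
qed

lemma inj_vec: "inj_on (\<lambda>m. vec (m * gg)) MM"
proof (rule inj_onI)
  fix m m' assume mm: "m \<in> MM" "m' \<in> MM" "vec (m * gg) = vec (m' * gg)"
  have "coeff (m * gg) j = coeff (m' * gg) j" for j
  proof (cases "j < n")
    case True thus ?thesis using fun_cong[OF mm(3), of j] by (simp add: vec_def)
  next
    case False
    thus ?thesis using MM_deg[OF mm(1)] MM_deg[OF mm(2)] by (auto simp: coeff_eq_0)
  qed
  hence "m * gg = m' * gg" by (rule poly_eqI)
  thus "m = m'" using gen_poly_nz[of Z] by simp
qed

lemma card_C: "card CC = q ^ kk"
  using card_image[OF inj_vec] C_image card_MM by simp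

lemma C_eval:
  assumes c: "c \<in> CC" and b: "b \<in> Z"
  shows "(\<Sum>j<n. c j * b ^ j) = 0"
proof -
  obtain m where m: "inFq m" "c = vec (m * gg mod QQ)" using c C_alt by auto
  have bn: "b ^ n = 1" using b Zsub Rn_root by auto
  have "poly (m * gg mod QQ) b = poly (m * gg) b" by (rule poly_mod) (simp add: poly_monom bn)
  also have "\<dots> = 0" using gen_poly_root[OF finite_Z b] by simp
  finally have "poly (m * gg mod QQ) b = 0" .
  moreover have "poly (m * gg mod QQ) b = (\<Sum>j<n. coeff (m * gg mod QQ) j * b ^ j)"
    using deg_mod_Q by (intro poly_sum_lessN) auto
  moreover have "(\<Sum>j<n. c j * b ^ j) = (\<Sum>j<n. coeff (m * gg mod QQ) j * b ^ j)"
    by (simp add: m vec_def)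
  ultimately show ?thesis by simp
qed

lemma inj_alpha: "inj_on (\<lambda>j. \<alpha> ^ j) {..<n}"
proof (rule inj_onI)
  fix a b assume ab: "a \<in> {..<n}" "b \<in> {..<n}" "\<alpha> ^ a = \<alpha> ^ b"
  hence "E (int a) = E (int b)" by simp
  hence "int a mod int n = int b mod int n" by (simp only: E_eq_iff)
  thus "a = b" using ab by simp
qed

lemma C_bch:
  assumes run: "\<And>t. t < D - 1 \<Longrightarrow> E (b + int t) \<in> Z"
    and c: "c \<in> CC" "c \<noteq> (\<lambda>_. 0)"
  shows "hweight n c \<ge> D"
proof -
  define y where "y j = c j * E b ^ j" for j
  have "card {j. j < n \<and> y j \<noteq> 0} \<ge> D"
  proof (rule bch_weight[where x = "\<lambda>j. \<alpha> ^ j"])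
    show "inj_on (\<lambda>j. \<alpha> ^ j) {..<n}" by (rule inj_alpha)
    fix t assume "t < D - 1"
    hence "(\<Sum>j<n. c j * E (b + int t) ^ j) = 0" using run c(1) C_eval by blast
    moreover have "E (b + int t) ^ j = E b ^ j * (\<alpha> ^ j) ^ t" for j
      by (simp add: E_add power_mult_distrib flip: power_mult) (simp add: mult.commute)
    ultimately show "(\<Sum>j<n. y j * (\<alpha> ^ j) ^ t) = 0" by (simp add: y_def mult.assoc)
  next
    obtain j where j: "c j \<noteq> 0" using c(2) by auto
    hence "j < n" using C_out[OF c(1)] by (meson not_less)
    thus "\<exists>j<n. y j \<noteq> 0" using j E_nz by (auto simp: y_def)
  qed
  moreover have "{j. j < n \<and> y j \<noteq> 0} = {j. j < n \<and> c j \<noteq> 0}" using E_nz by (auto simp: y_def)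
  ultimately show ?thesis by (simp add: hweight_def)
qed

end

context code
begin

lemma C_add: "c \<in> CC \<Longrightarrow> c' \<in> CC \<Longrightarrow> (\<lambda>j. c j + c' j) \<in> CC"
  using C_linear unfolding linear_code_Fq_def by blast

lemma C_smult: "a \<in> Fq q \<Longrightarrow> c \<in> CC \<Longrightarrow> (\<lambda>j. a * c j) \<in> CC"
  using C_linear unfolding linear_code_Fq_def by blast

lemma finite_C: "finite CC"
  using card_C q_pos by (intro card_ge_0_finite) simp

end

locale code2 = code +
  fixes nu mm :: nat and g0 :: int and \<delta> :: nat
  assumes n_eq: "n = nu * mm"
    and locz: "\<And>e t. e < nu \<Longrightarrow> t < \<delta> - 1 \<Longrightarrow> E (g0 + int e * int mm + int t) \<in> Z"
begin

lemma nu_pos: "nu > 0" and mm_pos: "mm > 0"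
  using n_pos n_eq by auto

lemma idx_lt: "a < nu \<Longrightarrow> s < mm \<Longrightarrow> a + nu * s < n"
proof -
  assume as: "a < nu" "s < mm"
  have "a + nu * s < nu + nu * s" using as by simp
  also have "\<dots> = nu * (s + 1)" by (simp add: algebra_simps)
  also have "\<dots> \<le> nu * mm" using as by (intro mult_le_mono2) simp
  finally show ?thesis using n_eq by simp
qed

lemma local_zero_X:
  assumes w: "w \<in> CC" and t: "t < \<delta> - 1" and a: "a < nu"
  shows "(\<Sum>s<mm. w (a + nu * s) * E (g0 + int t) ^ (a + nu * s)) = 0"
proof -
  define G where "G = g0 + int t"
  define X where "X a' = (\<Sum>s<mm. w (a' + nu * s) * E G ^ (a' + nu * s))" for a'
  define z where "z e = E (int mm) ^ e" for e :: nat
  have rootsP: "(\<Sum>a'<nu. X a' * z e ^ a') = 0" if e: "e < nu" for e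
  proof -
    define B where "B = E (g0 + int e * int mm + int t)"
    have bZ: "B \<in> Z" unfolding B_def using locz e t by blast
    have "(\<Sum>j<n. w j * B ^ j) = 0" by (rule C_eval[OF w bZ])
    moreover have "(\<Sum>j<n. w j * B ^ j) = (\<Sum>a'<nu. \<Sum>s<mm. w (a' + nu * s) * B ^ (a' + nu * s))"
      using n_eq sum_split_mod by simp
    moreover have "B ^ (a' + nu * s) = E G ^ (a' + nu * s) * z e ^ a'" for a' s
    proof -
      have "B = E G * E (int e * int mm)" unfolding B_def G_def
        by (simp only: E_add[symmetric]) (simp add: algebra_simps)
      hence "B ^ (a' + nu * s) = E G ^ (a' + nu * s) * E (int e * int mm) ^ (a' + nu * s)"
        by (simp add: power_mult_distrib)
      moreover have "E (int e * int mm) ^ (a' + nu * s) = z e ^ a'"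
      proof -
        have "E (int e * int mm) ^ (a' + nu * s) = E (int e * int mm * int (a' + nu * s))" by (rule E_pow)
        also have "\<dots> = E (int e * int mm * int a' + int n * (int e * int s))" by (simp add: n_eq algebra_simps)
        also have "\<dots> = E (int e * int mm * int a')" by (simp only: E_add E_nk) simp
        also have "\<dots> = E (int mm * int (e * a'))" by (simp add: algebra_simps)
        also have "\<dots> = \<alpha> ^ (mm * (e * a'))" by (simp only: of_nat_mult[symmetric] E_nat)
        also have "\<dots> = z e ^ a'" by (simp add: z_def power_mult)
        finally show ?thesis .
      qed
      ultimately show ?thesis by simp
    qed
    ultimately show ?thesis by (simp add: X_def sum_distrib_right mult.assoc)
  qed
  define P where "P = (\<Sum>a'<nu. monom (X a') a')"
  have coeffP: "coeff P i = (if i < nu then X i else 0)" for i by (simp add: P_def coeff_sum)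
  have polyP: "poly P x = (\<Sum>a'<nu. X a' * x ^ a')" for x by (simp add: P_def poly_sum poly_monom)
  have "P = 0"
  proof (rule ccontr)
    assume nz: "P \<noteq> 0"
    have "coeff P (degree P) \<noteq> 0" using nz by simp
    hence dP: "degree P < nu" using coeffP[of "degree P"] by (simp split: if_splits)
    have sub: "z ` {..<nu} \<subseteq> {x. poly P x = 0}" using rootsP polyP by auto
    have inj: "inj_on z {..<nu}"
    proof (rule inj_onI)
      fix e e' assume ee: "e \<in> {..<nu}" "e' \<in> {..<nu}" "z e = z e'"
      have zE: "E (int mm * int f) = z f" for f
        by (simp only: of_nat_mult[symmetric] E_nat) (simp add: z_def power_mult)
      hence "E (int mm * int e) = E (int mm * int e')" using ee(3) by simp
      hence "int mm * int e mod int n = int mm * int e' mod int n" by (simp only: E_eq_iff)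
      moreover have "mm * e < n" "mm * e' < n" using ee n_eq mm_pos by auto
      ultimately have "mm * e = mm * e'"
        by (metis of_nat_mult mod_less of_nat_mod of_nat_eq_iff)
      thus "e = e'" using mm_pos by simp
    qed
    have "nu = card (z ` {..<nu})" using card_image[OF inj] by simp
    also have "\<dots> \<le> card {x. poly P x = 0}" using sub poly_roots_finite[OF nz] by (rule card_mono[rotated])
    also have "\<dots> \<le> degree P" by (rule card_poly_roots_bound[OF nz])
    finally show False using dP by simp
  qed
  hence "X a = 0" using coeffP[of a] a by simp
  thus ?thesis by (simp add: X_def G_def)
qed

lemma local_bch:
  assumes w: "w \<in> CC" and a: "a < nu" and ex: "\<exists>s<mm. w (a + nu * s) \<noteq> 0"
  shows "card {s. s < mm \<and> w (a + nu * s) \<noteq> 0} \<ge> \<delta>"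
proof -
  define y where "y s = w (a + nu * s) * E g0 ^ (a + nu * s)" for s
  have "card {s. s < mm \<and> y s \<noteq> 0} \<ge> \<delta>"
  proof (rule bch_weight[where x = "\<lambda>s. \<alpha> ^ (nu * s)"])
    show "inj_on (\<lambda>s. \<alpha> ^ (nu * s)) {..<mm}"
    proof (rule inj_onI)
      fix s s' assume ss: "s \<in> {..<mm}" "s' \<in> {..<mm}" "\<alpha> ^ (nu * s) = \<alpha> ^ (nu * s')"
      have "nu * s \<in> {..<n}" "nu * s' \<in> {..<n}" using idx_lt[OF nu_pos] ss by fastforce+
      hence "nu * s = nu * s'" using inj_alpha ss(3) by (auto dest: inj_onD)
      thus "s = s'" using nu_pos by simp
    qed
    fix t assume t: "t < \<delta> - 1"
    have "(\<Sum>s<mm. w (a + nu * s) * E (g0 + int t) ^ (a + nu * s)) = (\<alpha> ^ t) ^ a * (\<Sum>s<mm. y s * (\<alpha> ^ (nu * s)) ^ t)"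
      unfolding sum_distrib_left
    proof (rule sum.cong[OF refl])
      fix s
      have "E (g0 + int t) ^ (a + nu * s) = E g0 ^ (a + nu * s) * ((\<alpha> ^ t) ^ a * (\<alpha> ^ (nu * s)) ^ t)"
        by (simp add: E_add power_mult_distrib power_add flip: power_mult) (simp add: mult_ac)
      thus "w (a + nu * s) * E (g0 + int t) ^ (a + nu * s) = (\<alpha> ^ t) ^ a * (y s * (\<alpha> ^ (nu * s)) ^ t)"
        by (simp add: y_def mult_ac)
    qed
    hence "(\<alpha> ^ t) ^ a * (\<Sum>s<mm. y s * (\<alpha> ^ (nu * s)) ^ t) = 0" using local_zero_X[OF w t a] by simp
    thus "(\<Sum>s<mm. y s * (\<alpha> ^ (nu * s)) ^ t) = 0" using alpha_nz by simp
  next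
    show "\<exists>s<mm. y s \<noteq> 0" using ex E_nz by (auto simp: y_def)
  qed
  moreover have "{s. s < mm \<and> y s \<noteq> 0} = {s. s < mm \<and> w (a + nu * s) \<noteq> 0}"
    using E_nz by (auto simp: y_def)
  ultimately show ?thesis by simp
qed

end

context code2
begin

lemma idx_decomp: "j < n \<Longrightarrow> j = j mod nu + nu * (j div nu) \<and> j mod nu < nu \<and> j div nu < mm"
  using nu_pos n_eq by (auto intro: less_mult_imp_div_less simp: mult.commute)

lemma C_LRC:
  assumes mmr: "mm \<le> r + \<delta> - 1"
  shows "is_LRC n r \<delta> CC"
  unfolding is_LRC_def
proof (intro allI impI)
  fix i assume i: "i < n"
  define a where "a = i mod nu"
  define S where "S = (\<lambda>s. a + nu * s) ` {..<mm}"
  have a: "a < nu" using nu_pos by (simp add: a_def)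
  have inj: "inj_on (\<lambda>s. a + nu * s) A" for A using nu_pos by (auto simp: inj_on_def)
  show "\<exists>S. S \<subseteq> {..<n} \<and> i \<in> S \<and> card S \<le> r + \<delta> - 1 \<and> dist_at_least n (punctured S CC) \<delta>"
  proof (intro exI conjI)
    show "S \<subseteq> {..<n}" using idx_lt[OF a] by (auto simp: S_def)
    show "i \<in> S" unfolding S_def a_def
      by (rule image_eqI[where x = "i div nu"]) (use idx_decomp[OF i] in simp_all)
    show "card S \<le> r + \<delta> - 1" using mmr card_image[OF inj] by (simp add: S_def)
    show "dist_at_least n (punctured S CC) \<delta>"
      unfolding dist_at_least_def
    proof (intro ballI impI)
      fix c assume c: "c \<in> punctured S CC" "c \<noteq> (\<lambda>_. 0)"
      then obtain w where w: "w \<in> CC" "c = (\<lambda>j. if j \<in> S then w j else 0)"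
        by (auto simp: punctured_def)
      obtain j where j: "c j \<noteq> 0" using c(2) by auto
      hence jS: "j \<in> S" "w j \<noteq> 0" using w by (auto split: if_splits)
      then obtain s where s: "s < mm" "j = a + nu * s" by (auto simp: S_def)
      have ex: "\<exists>s<mm. w (a + nu * s) \<noteq> 0" using s jS by blast
      have "{j. j < n \<and> c j \<noteq> 0} = (\<lambda>s. a + nu * s) ` {s. s < mm \<and> w (a + nu * s) \<noteq> 0}"
        using idx_lt[OF a] by (auto simp: w S_def)
      hence "hweight n c = card {s. s < mm \<and> w (a + nu * s) \<noteq> 0}"
        by (simp add: hweight_def card_image[OF inj])
      thus "\<delta> \<le> hweight n c" using local_bch[OF w(1) a ex] by simp
    qed
  qed
qed

lemma C_upper:
  assumes k: "kk \<ge> 1" and T: "T < nu" and e0: "e0 \<le> mm"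
    and rr: "r + (\<delta> - 1) = mm" and Tr: "T * r + e0 = kk - 1" and d1: "\<delta> \<ge> 1"
  shows "\<exists>w\<in>CC. w \<noteq> (\<lambda>_. 0) \<and> hweight n w \<le> n - (T * mm + e0)"
proof -
  define S' where "S' = (\<lambda>z. fst z + nu * snd z) ` ({..<T} \<times> {..<r}) \<union> (\<lambda>s. T + nu * s) ` {..<e0}"
  have fS: "finite S'" by (simp add: S'_def)
  have cS: "card S' \<le> kk - 1"
  proof -
    have "card S' \<le> card ((\<lambda>z. fst z + nu * snd z) ` ({..<T} \<times> {..<r})) + card ((\<lambda>s. T + nu * s) ` {..<e0})"
      unfolding S'_def by (rule card_Un_le)
    also have "\<dots> \<le> card ({..<T} \<times> {..<r}) + card {..<e0}"
      by (intro add_mono card_image_le) auto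
    finally show ?thesis using Tr by (simp add: card_cartesian_product)
  qed
  define \<rho> where "\<rho> w = restrict w S'" for w :: "nat \<Rightarrow> 'a"
  have img: "\<rho> ` CC \<subseteq> PiE S' (\<lambda>_. Fq q :: 'a set)" using C_vals by (auto simp: \<rho>_def)
  have cP: "card (PiE S' (\<lambda>_. Fq q :: 'a set)) < card CC"
  proof -
    have "card (PiE S' (\<lambda>_. Fq q :: 'a set)) = q ^ card S'" using fS by (simp add: card_PiE card_Fq)
    also have "\<dots> \<le> q ^ (kk - 1)" using cS q_pos by (intro power_increasing) auto
    also have "\<dots> < q ^ kk" using k q_ge2 by (intro power_strict_increasing) auto
    finally show ?thesis using card_C by simp
  qed
  have "\<not> inj_on \<rho> CC"
  proof
    assume "inj_on \<rho> CC"
    hence "card CC = card (\<rho> ` CC)" by (simp add: card_image)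
    also have "\<dots> \<le> card (PiE S' (\<lambda>_. Fq q :: 'a set))"
      using img fS by (intro card_mono) (auto intro: finite_PiE)
    finally show False using cP by simp
  qed
  then obtain c c' where cc: "c \<in> CC" "c' \<in> CC" "c \<noteq> c'" "\<rho> c = \<rho> c'"
    unfolding inj_on_def by blast
  define w where "w = (\<lambda>j. c j + (\<lambda>j. (- 1) * c' j) j)"
  have wC: "w \<in> CC" unfolding w_def
    by (intro C_add cc(1) C_smult cc(2) Fq_minus Fq_1)
  have wS: "w j = 0" if "j \<in> S'" for j
    using fun_cong[OF cc(4), of j] that by (simp add: \<rho>_def w_def)
  have wnz: "w \<noteq> (\<lambda>_. 0)"
  proof
    assume "w = (\<lambda>_. 0)"
    hence w0: "w j = 0" for j by simp
    have "c j = c' j" for j using w0[of j] by (simp add: w_def)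
    thus False using cc(3) by auto
  qed
  have grp: "w (a + nu * s) = 0" if a: "a < T" and s: "s < mm" for a s
  proof (rule ccontr)
    assume nz: "w (a + nu * s) \<noteq> 0"
    have aN: "a < nu" using a T by simp
    have "\<delta> \<le> card {s. s < mm \<and> w (a + nu * s) \<noteq> 0}"
      using local_bch[OF wC aN] nz s by blast
    also have "\<dots> \<le> card {r..<mm}"
    proof (rule card_mono)
      show "{s. s < mm \<and> w (a + nu * s) \<noteq> 0} \<subseteq> {r..<mm}"
      proof
        fix s' assume s': "s' \<in> {s. s < mm \<and> w (a + nu * s) \<noteq> 0}"
        have "\<not> s' < r"
        proof
          assume "s' < r"
          hence "a + nu * s' \<in> S'" unfolding S'_def using a
            by (intro UnI1 image_eqI[where x = "(a, s')"]) auto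
          thus False using wS s' by auto
        qed
        thus "s' \<in> {r..<mm}" using s' by simp
      qed
    qed simp
    also have "\<dots> = \<delta> - 1" using rr by simp
    finally show False using d1 by linarith
  qed
  have supp: "{j. j < n \<and> w j \<noteq> 0} \<subseteq>
      (\<lambda>z. fst z + nu * snd z) ` ({T<..<nu} \<times> {..<mm}) \<union> (\<lambda>s. T + nu * s) ` {e0..<mm}"
  proof
    fix j assume j: "j \<in> {j. j < n \<and> w j \<noteq> 0}"
    define a where "a = j mod nu"
    define s where "s = j div nu"
    have dec: "j = a + nu * s" "a < nu" "s < mm" using idx_decomp[of j] j by (auto simp: a_def s_def)
    have "\<not> a < T" using grp dec j by auto
    moreover have "\<not> (a = T \<and> s < e0)"
    proof
      assume "a = T \<and> s < e0"
      hence "j \<in> S'" unfolding S'_def using dec by auto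
      thus False using wS j by auto
    qed
    ultimately have "(T < a) \<or> (a = T \<and> e0 \<le> s)" by auto
    thus "j \<in> (\<lambda>z. fst z + nu * snd z) ` ({T<..<nu} \<times> {..<mm}) \<union> (\<lambda>s. T + nu * s) ` {e0..<mm}"
    proof
      assume "T < a"
      hence "j = (\<lambda>z. fst z + nu * snd z) (a, s) \<and> (a, s) \<in> {T<..<nu} \<times> {..<mm}" using dec by simp
      thus ?thesis by blast
    next
      assume "a = T \<and> e0 \<le> s"
      hence "j = T + nu * s \<and> s \<in> {e0..<mm}" using dec by simp
      thus ?thesis by blast
    qed
  qed
  have "hweight n w \<le> card ((\<lambda>z. fst z + nu * snd z) ` ({T<..<nu} \<times> {..<mm}) \<union> (\<lambda>s. T + nu * s) ` {e0..<mm})"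
    unfolding hweight_def using supp by (intro card_mono) auto
  also have "\<dots> \<le> card ((\<lambda>z. fst z + nu * snd z) ` ({T<..<nu} \<times> {..<mm})) + card ((\<lambda>s. T + nu * s) ` {e0..<mm})"
    by (rule card_Un_le)
  also have "\<dots> \<le> card ({T<..<nu} \<times> {..<mm}) + card {e0..<mm}"
    by (intro add_mono card_image_le) auto
  also have "\<dots> = (nu - Suc T) * mm + (mm - e0)" by (simp add: card_cartesian_product)
  also have "\<dots> = n - (T * mm + e0)"
  proof -
    from less_imp_Suc_add[OF T] obtain d where d: "nu = Suc (T + d)" by blast
    show ?thesis using e0 by (simp add: n_eq d algebra_simps)
  qed
  finally show ?thesis using wC wnz by blast
qed

end

context code2
begin

lemma master:
  assumes run: "\<And>t. t < D - 1 \<Longrightarrow> E (b + int t) \<in> Z"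
    and mmr: "mm = r + \<delta> - 1" and r1: "r \<ge> 1" and d1: "\<delta> \<ge> 1"
    and k: "kk \<ge> 1" and T: "T < nu" and e0: "e0 \<le> mm" and Tr: "T * r + e0 = kk - 1"
    and D: "D = n - (T * mm + e0)"
    and opt: "int D = int n - int kk - (\<lceil>real kk / real r\<rceil> - 1) * (int \<delta> - 1) + 1"
  shows "optimal_LRC q n r \<delta> CC kk D"
proof -
  have rr: "r + (\<delta> - 1) = mm" using mmr d1 by simp
  obtain w where w: "w \<in> CC" "w \<noteq> (\<lambda>_. 0)" "hweight n w \<le> D"
    using C_upper[OF k T e0 rr Tr d1] D by blast
  have low: "\<And>c. c \<in> CC - {\<lambda>_. 0} \<Longrightarrow> hweight n c \<ge> D"
    using C_bch[OF run] by blast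
  have wD: "hweight n w = D" using low[of w] w by simp
  have md: "min_dist n CC = D"
    unfolding min_dist_def
  proof (rule Min_eqI)
    show "finite (hweight n ` (CC - {\<lambda>_. 0}))" using finite_C by simp
    show "\<And>y. y \<in> hweight n ` (CC - {\<lambda>_. 0}) \<Longrightarrow> D \<le> y" using low by blast
    show "D \<in> hweight n ` (CC - {\<lambda>_. 0})" using w wD by (intro image_eqI[of _ _ w]) auto
  qed
  show ?thesis unfolding optimal_LRC_def
    using C_linear card_C md C_LRC[of r] mmr opt by (simp add: code_dim_def)
qed

end

locale shape = fqs +
  fixes nu mm :: nat and u c i K \<beta> :: int
  assumes n_eq: "n = nu * mm"
    and i0: "0 \<le> i" and \<beta>0: "0 \<le> \<beta>" and K1: "1 \<le> K" and K2: "K + 1 \<le> int nu"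
    and sep: "i + 2 * \<beta> < int mm"
    and c1: "(u + c + i) mod int n = 0"
    and c2: "(2 * c + (K + 1) * int mm) mod int n = 0"
    and c3: "u \<le> c + (K + 1 - int nu) * int mm"
    and c4: "c + K * int mm + \<beta> - (u - \<beta>) < int n"
begin

definition AA :: "'a set" where
  "AA = E ` ({j. u \<le> j \<and> j \<le> c + i} \<union> {c + e * int mm | e. 1 \<le> e \<and> e \<le> K})"
definition BB :: "'a set" where
  "BB = E ` {j. - \<beta> \<le> j \<and> j \<le> \<beta>}"
definition I0 :: "int set" where
  "I0 = {j. u - \<beta> \<le> j \<and> j \<le> c + i + \<beta>}"
definition XX :: "int set" where
  "XX = (\<lambda>z. c + fst z * int mm + snd z) ` ({1..K} \<times> {-\<beta>..\<beta>})"
definition JJ :: "int set" where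
  "JJ = I0 \<union> XX"

lemma mm_pos': "int mm > 0" using sep i0 \<beta>0 by linarith

lemma u_le_c: "u \<le> c"
proof -
  have "(K + 1 - int nu) * int mm \<le> 0" using K2 mm_pos' by (simp add: mult_nonpos_nonneg)
  thus ?thesis using c3 by linarith
qed

lemma ZJ: "setmult AA BB = E ` JJ"
proof (intro equalityI subsetI)
  fix x assume "x \<in> setmult AA BB"
  then obtain a b where ab: "x = E a * E b" "a \<in> {j. u \<le> j \<and> j \<le> c + i} \<union> {c + e * int mm | e. 1 \<le> e \<and> e \<le> K}"
    "- \<beta> \<le> b" "b \<le> \<beta>"
    unfolding setmult_def AA_def BB_def by blast
  have x: "x = E (a + b)" using ab(1) by (simp add: E_add)
  from ab(2) show "x \<in> E ` JJ"
  proof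
    assume "a \<in> {j. u \<le> j \<and> j \<le> c + i}"
    hence "a + b \<in> I0" using ab by (auto simp: I0_def)
    thus ?thesis using x by (auto simp: JJ_def)
  next
    assume "a \<in> {c + e * int mm | e. 1 \<le> e \<and> e \<le> K}"
    then obtain e where e: "a = c + e * int mm" "1 \<le> e" "e \<le> K" by blast
    hence "a + b \<in> XX" unfolding XX_def using ab
      by (intro image_eqI[where x = "(e, b)"]) auto
    thus ?thesis using x by (auto simp: JJ_def)
  qed
next
  fix x assume "x \<in> E ` JJ"
  then obtain j where j: "x = E j" "j \<in> JJ" by blast
  have mem: "E a * E b \<in> setmult AA BB" if "a \<in> {j. u \<le> j \<and> j \<le> c + i} \<union> {c + e * int mm | e. 1 \<le> e \<and> e \<le> K}"
    "- \<beta> \<le> b" "b \<le> \<beta>" for a b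
    unfolding setmult_def AA_def BB_def using that by blast
  from j(2) show "x \<in> setmult AA BB" unfolding JJ_def
  proof
    assume jI: "j \<in> I0"
    define b where "b = (if j < u then j - u else if j > c + i then j - (c + i) else 0)"
    have b: "- \<beta> \<le> b" "b \<le> \<beta>" "u \<le> j - b" "j - b \<le> c + i"
      using jI u_le_c i0 \<beta>0 by (auto simp: b_def I0_def)
    have "x = E (j - b) * E b" using j(1) by (simp add: E_add[symmetric])
    thus ?thesis using mem[of "j - b" b] b by auto
  next
    assume "j \<in> XX"
    then obtain e b where eb: "j = c + e * int mm + b" "1 \<le> e" "e \<le> K" "- \<beta> \<le> b" "b \<le> \<beta>"
      unfolding XX_def by auto
    have "x = E (c + e * int mm) * E b" using j(1) eb by (simp add: E_add[symmetric])
    thus ?thesis using mem[of "c + e * int mm" b] eb by blast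
  qed
qed

lemma JJ_bounds: "j \<in> JJ \<Longrightarrow> u - \<beta> \<le> j \<and> j \<le> c + K * int mm + \<beta>"
proof -
  assume j: "j \<in> JJ"
  have Km: "int mm \<le> K * int mm" using K1 mm_pos' by simp
  show ?thesis using j unfolding JJ_def
  proof
    assume "j \<in> I0" thus ?thesis using Km sep \<beta>0 by (auto simp: I0_def)
  next
    assume "j \<in> XX"
    then obtain e b where eb: "j = c + e * int mm + b" "1 \<le> e" "e \<le> K" "- \<beta> \<le> b" "b \<le> \<beta>"
      unfolding XX_def by auto
    have "e * int mm \<le> K * int mm" using eb mm_pos' by (simp add: mult_right_mono)
    moreover have "int mm \<le> e * int mm" using eb mm_pos' by simp
    ultimately show ?thesis using eb u_le_c Km \<beta>0 by linarith
  qed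
qed

lemma inj_JJ: "inj_on E JJ"
proof (rule inj_onI)
  fix j j' assume jj: "j \<in> JJ" "j' \<in> JJ" "E j = E j'"
  hence "j mod int n = j' mod int n" by (simp only: E_eq_iff)
  hence dv: "int n dvd j - j'" by (simp add: mod_eq_dvd_iff)
  have "\<bar>j - j'\<bar> < int n" using JJ_bounds[OF jj(1)] JJ_bounds[OF jj(2)] c4 by linarith
  show "j = j'"
  proof (rule ccontr)
    assume "j \<noteq> j'"
    hence "int n \<le> \<bar>j - j'\<bar>" using dv dvd_imp_le_int[of "j - j'" "int n"] by simp
    thus False using \<open>\<bar>j - j'\<bar> < int n\<close> by simp
  qed
qed

lemma card_JJ: "card JJ = nat (c + i - u + 2 * \<beta> + 1) + nat K * nat (2 * \<beta> + 1)"
proof -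
  have injX: "inj_on (\<lambda>z. c + fst z * int mm + snd z) ({1..K} \<times> {-\<beta>..\<beta>})"
  proof (rule inj_onI)
    fix z z' assume zz: "z \<in> {1..K} \<times> {-\<beta>..\<beta>}" "z' \<in> {1..K} \<times> {-\<beta>..\<beta>}"
      "c + fst z * int mm + snd z = c + fst z' * int mm + snd z'"
    obtain e b where z: "z = (e, b)" by (cases z)
    obtain e' b' where z': "z' = (e', b')" by (cases z')
    have eq: "(e - e') * int mm = b' - b" using zz(3) by (simp add: z z' algebra_simps)
    have bb: "\<bar>b' - b\<bar> \<le> 2 * \<beta>" using zz z z' by auto
    have "e = e'"
    proof (rule ccontr)
      assume "e \<noteq> e'"
      hence "1 \<le> \<bar>e - e'\<bar>" by simp
      hence "int mm \<le> \<bar>e - e'\<bar> * int mm" using mm_pos' by simp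
      also have "\<dots> = \<bar>(e - e') * int mm\<bar>" by (simp add: abs_mult)
      also have "\<dots> = \<bar>b' - b\<bar>" using eq by simp
      finally show False using bb sep i0 by linarith
    qed
    thus "z = z'" using eq z z' by simp
  qed
  have disj: "I0 \<inter> XX = {}"
  proof -
    have "j \<notin> I0" if jX: "j \<in> XX" for j
    proof -
      obtain e b where eb: "j = c + e * int mm + b" "1 \<le> e" "e \<le> K" "- \<beta> \<le> b" "b \<le> \<beta>"
        using jX unfolding XX_def by auto
      have "int mm \<le> e * int mm" using eb mm_pos' by simp
      thus ?thesis using eb sep by (auto simp: I0_def)
    qed
    thus ?thesis by blast
  qed
  have "card JJ = card I0 + card XX"
    unfolding JJ_def using disj by (intro card_Un_disjoint) (auto simp: I0_def XX_def)
  moreover have "card I0 = nat (c + i - u + 2 * \<beta> + 1)"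
  proof -
    have "I0 = {u - \<beta>..c + i + \<beta>}" by (auto simp: I0_def)
    thus ?thesis by (simp add: algebra_simps)
  qed
  moreover have "card XX = nat K * nat (2 * \<beta> + 1)"
    unfolding XX_def using card_image[OF injX] by (simp add: card_cartesian_product algebra_simps)
  ultimately show ?thesis by simp
qed

lemma card_Z_shape: "card (setmult AA BB) = nat (c + i - u + 2 * \<beta> + 1) + nat K * nat (2 * \<beta> + 1)"
  using ZJ card_image[OF inj_JJ] card_JJ by simp

lemma Z_sub: "setmult AA BB \<subseteq> Rn"
  using ZJ E_in_Rn by auto

lemma Z_sym: "x \<in> setmult AA BB \<Longrightarrow> inverse x \<in> setmult AA BB"
proof -
  assume "x \<in> setmult AA BB"
  then obtain j where j: "x = E j" "j \<in> JJ" using ZJ by auto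
  have ix: "inverse x = E (- j)" using j by (simp add: power_int_minus)
  from j(2) have "j \<in> I0 \<or> j \<in> XX" by (simp add: JJ_def)
  thus ?thesis
  proof
    assume jI: "j \<in> I0"
    obtain k where k: "u + c + i = int n * k" using c1 by (auto simp: dvd_eq_mod_eq_0[symmetric] elim!: dvdE)
    have "E (- j) = E (- j + (u + c + i))" by (simp only: k E_add E_nk) simp
    moreover have "- j + (u + c + i) \<in> I0" using jI by (auto simp: I0_def)
    ultimately show ?thesis using ix by (auto simp: ZJ JJ_def)
  next
    assume "j \<in> XX"
    then obtain e b where eb: "j = c + e * int mm + b" "1 \<le> e" "e \<le> K" "- \<beta> \<le> b" "b \<le> \<beta>"
      unfolding XX_def by auto
    obtain k where k: "2 * c + (K + 1) * int mm = int n * k" using c2 by (auto simp: dvd_eq_mod_eq_0[symmetric] elim!: dvdE)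
    have e1: "E (- j) = E (- j + (2 * c + (K + 1) * int mm))" by (simp only: k E_add E_nk) simp
    have e2: "- j + (2 * c + (K + 1) * int mm) = c + (K + 1 - e) * int mm + (- b)"
      using eb by (simp add: algebra_simps)
    have ie: "inverse x = E (c + (K + 1 - e) * int mm + (- b))" using ix e1 e2 by metis
    have "c + (K + 1 - e) * int mm + (- b) \<in> XX"
      unfolding XX_def using eb by (intro image_eqI[where x = "(K + 1 - e, - b)"]) auto
    hence "c + (K + 1 - e) * int mm + (- b) \<in> JJ" by (simp add: JJ_def)
    thus ?thesis using ie ZJ by auto
  qed
qed

lemma Z_run: "t < nat (c + i - u + 2 * \<beta> + 1) \<Longrightarrow> E (u - \<beta> + int t) \<in> setmult AA BB"
  unfolding ZJ JJ_def I0_def by auto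

lemma Z_loc:
  assumes e: "e < nu" and t: "t < nat (2 * \<beta> + 1)"
  shows "E ((c + (K + 1 - int nu) * int mm - \<beta>) + int e * int mm + int t) \<in> setmult AA BB"
proof -
  define e' where "e' = int e + K + 1 - int nu"
  define b where "b = int t - \<beta>"
  have eq: "(c + (K + 1 - int nu) * int mm - \<beta>) + int e * int mm + int t = c + e' * int mm + b"
    by (simp add: e'_def b_def algebra_simps)
  have b: "- \<beta> \<le> b" "b \<le> \<beta>" using t by (auto simp: b_def)
  have e'K: "e' \<le> K" using e by (simp add: e'_def)
  show ?thesis unfolding eq ZJ JJ_def
  proof (cases "1 \<le> e'")
    case True
    hence "c + e' * int mm + b \<in> XX" unfolding XX_def using b e'K
      by (intro image_eqI[where x = "(e', b)"]) auto
    thus "E (c + e' * int mm + b) \<in> E ` (I0 \<union> XX)" by blast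
  next
    case False
    have "e' * int mm \<le> 0" using False mm_pos' by (simp add: mult_nonpos_nonneg)
    moreover have "(K + 1 - int nu) * int mm \<le> e' * int mm"
      using mm_pos' by (intro mult_right_mono) (auto simp: e'_def)
    ultimately have "c + e' * int mm + b \<in> I0" using b c3 i0 by (auto simp: I0_def)
    thus "E (c + e' * int mm + b) \<in> E ` (I0 \<union> XX)" by blast
  qed
qed

end

lemma ceil_div_lemma:
  fixes k r :: nat and a s :: int
  assumes r: "r \<ge> 1" and k: "int k = a * int r - s" and s: "0 \<le> s" "s < int r"
  shows "\<lceil>real k / real r\<rceil> = a"
proof -
  have rk: "real k = real_of_int a * real r - real_of_int s"
    using arg_cong[OF k, of real_of_int] by simp
  have rp: "real r > 0" using r by simp
  have x: "real k / real r = real_of_int a - real_of_int s / real r"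
    using rk rp by (simp add: field_simps)
  have "real_of_int s / real r < 1" using s rp by (simp add: divide_less_eq)
  moreover have "0 \<le> real_of_int s / real r" using s rp by simp
  ultimately show ?thesis unfolding x by (intro ceiling_unique) auto
qed

context shape
begin

lemma shape_opt:
  assumes mmr: "mm = r + \<delta> - 1" and r1: "r \<ge> 1" and d2: "\<delta> \<ge> 2" and bd: "2 * \<beta> + 1 = int \<delta> - 1"
    and kk: "int kk' = int n - (c + i - u + 2 * \<beta> + 1) - K * (2 * \<beta> + 1)"
    and k1: "kk' \<ge> 1" and T: "T < nu" and e0: "e0 \<le> mm" and Tr: "T * r + e0 = kk' - 1"
    and D: "D = n - (T * mm + e0)" and D1: "int D = c + i - u + 2 * \<beta> + 2"
    and opt: "int D = int n - int kk' - (\<lceil>real kk' / real r\<rceil> - 1) * (int \<delta> - 1) + 1"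
  shows "optimal_LRC q n r \<delta> (cyclic_code q n (setmult AA BB)) kk' D"
proof -
  interpret C2: code2 q n \<alpha> "setmult AA BB" nu mm "c + (K + 1 - int nu) * int mm - \<beta>" \<delta>
  proof unfold_locales
    show "setmult AA BB \<subseteq> Rn" by (rule Z_sub)
    show "\<And>b. b \<in> setmult AA BB \<Longrightarrow> inverse b \<in> setmult AA BB" by (rule Z_sym)
    show "n = nu * mm" by (rule n_eq)
    fix e t assume "e < nu" "t < \<delta> - 1"
    moreover have "nat (2 * \<beta> + 1) = \<delta> - 1" using bd by simp
    ultimately show "E (c + (K + 1 - int nu) * int mm - \<beta> + int e * int mm + int t) \<in> setmult AA BB"
      using Z_loc by simp
  qed
  have cZ: "card (setmult AA BB) = nat (c + i - u + 2 * \<beta> + 1) + nat K * nat (2 * \<beta> + 1)"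
    by (rule card_Z_shape)
  have pos1: "0 \<le> c + i - u + 2 * \<beta> + 1" using u_le_c i0 \<beta>0 by linarith
  have icZ: "int (card (setmult AA BB)) = (c + i - u + 2 * \<beta> + 1) + K * (2 * \<beta> + 1)"
    using cZ pos1 K1 \<beta>0 by (simp add: of_nat_mult)
  have "card (setmult AA BB) \<le> n" using C2.card_Z .
  hence kkeq: "n - card (setmult AA BB) = kk'" using kk icZ by linarith
  have run: "E (u - \<beta> + int t) \<in> setmult AA BB" if "t < D - 1" for t
    using Z_run that D1 pos1 by simp
  have "optimal_LRC q n r \<delta> (cyclic_code q n (setmult AA BB)) (n - card (setmult AA BB)) D"
    by (rule C2.master[OF run mmr r1 _ _ T e0 _ D]) (use d2 k1 kkeq Tr opt in auto)
  thus ?thesis using kkeq by simp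
qed

end

context fqs
begin

lemma generic_part:
  fixes r \<delta> :: nat and i u c K :: int
  assumes r: "r \<ge> 1" and \<delta>: "\<delta> \<ge> 2" "even \<delta>" and dv: "(r + \<delta> - 1) dvd n"
    and i0: "0 \<le> i" and ir: "2 * i \<le> int r - 1"
    and K1: "1 \<le> K" and K2: "K + 1 \<le> int (n div (r + \<delta> - 1))"
    and c1: "(u + c + i) mod int n = 0"
    and c2: "(2 * c + (K + 1) * int (r + \<delta> - 1)) mod int n = 0"
    and c3: "u \<le> c + (K + 1 - int (n div (r + \<delta> - 1))) * int (r + \<delta> - 1)"
    and cu: "c + i - u = (int (n div (r + \<delta> - 1)) - K - 1) * int (r + \<delta> - 1) + 2 * i"
  shows "optimal_LRC q n r \<delta> (cyclic_code q n (setmult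
      (E ` ({j. u \<le> j \<and> j \<le> c + i} \<union> {c + e * int (r + \<delta> - 1) | e. 1 \<le> e \<and> e \<le> K}))
      (E ` {j. - ((int \<delta> - 2) div 2) \<le> j \<and> j \<le> (int \<delta> - 2) div 2})))
    (nat ((K + 1) * int r - 2 * i))
    (nat (int \<delta> + 2 * i + (int (n div (r + \<delta> - 1)) - K - 1) * int (r + \<delta> - 1)))"
proof -
  define mm where "mm = r + \<delta> - 1"
  define nu where "nu = n div mm"
  define m where "m = int mm"
  define \<nu> where "\<nu> = int nu"
  define \<beta> where "\<beta> = (int \<delta> - 2) div 2"
  define d where "d = int \<delta> - 1"
  obtain h where h: "\<delta> = 2 * h" using \<delta>(2) by (elim evenE)
  have bd: "2 * \<beta> + 1 = d" using h \<delta>(1) by (simp add: \<beta>_def d_def)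
  have \<beta>0: "0 \<le> \<beta>" using h \<delta>(1) by (simp add: \<beta>_def)
  have hm: "m = int r + d" using \<delta>(1) by (simp add: m_def mm_def d_def)
  have neq: "n = nu * mm" using dv by (simp add: nu_def mm_def)
  have hn: "int n = \<nu> * m" using neq by (simp add: \<nu>_def m_def)
  have dd: "d \<ge> 1" using \<delta>(1) by (simp add: d_def)
  have K2': "K + 1 \<le> \<nu>" using K2 by (simp add: \<nu>_def nu_def mm_def)
  have cu': "c + i - u = (\<nu> - K - 1) * m + 2 * i" using cu by (simp add: \<nu>_def nu_def mm_def m_def)
  have c3': "u \<le> c + (K + 1 - \<nu>) * m" using c3 by (simp add: \<nu>_def nu_def mm_def m_def)
  interpret S: shape q n \<alpha> nu mm u c i K \<beta>
  proof (intro shape.intro fqs_axioms shape_axioms.intro)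
    show "n = nu * mm" by (rule neq)
    show "0 \<le> i" by (rule i0)
    show "0 \<le> \<beta>" by (rule \<beta>0)
    show "1 \<le> K" by (rule K1)
    show "K + 1 \<le> int nu" using K2' by (simp add: \<nu>_def)
    show "i + 2 * \<beta> < int mm" using bd hm ir i0 by (simp add: m_def)
    show "(u + c + i) mod int n = 0" by (rule c1)
    show "(2 * c + (K + 1) * int mm) mod int n = 0" using c2 by (simp add: mm_def)
    show "u \<le> c + (K + 1 - int nu) * int mm" using c3' by (simp add: \<nu>_def m_def)
    have "c + K * m + \<beta> - (u - \<beta>) = (\<nu> - 1) * m + i + (d - 1)"
      using cu' bd by (simp add: algebra_simps)
    also have "\<dots> < \<nu> * m" using hm ir i0 by (simp add: algebra_simps)
    finally show "c + K * int mm + \<beta> - (u - \<beta>) < int n" using hn by (simp add: m_def)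
  qed
  have AA: "S.AA = E ` ({j. u \<le> j \<and> j \<le> c + i} \<union> {c + e * int (r + \<delta> - 1) | e. 1 \<le> e \<and> e \<le> K})"
    unfolding S.AA_def by (simp add: mm_def)
  have BB: "S.BB = E ` {j. - ((int \<delta> - 2) div 2) \<le> j \<and> j \<le> (int \<delta> - 2) div 2}"
    unfolding S.BB_def by (simp add: \<beta>_def)
  define kk' where "kk' = nat ((K + 1) * int r - 2 * i)"
  define T where "T = nat K"
  define e0 where "e0 = nat (int r - 2 * i - 1)"
  define D where "D = nat (int \<delta> + 2 * i + (\<nu> - K - 1) * m)"
  have Kr: "2 * int r \<le> (K + 1) * int r" using K1 r by (intro mult_right_mono) auto
  have ikk: "int kk' = (K + 1) * int r - 2 * i" using Kr ir by (simp add: kk'_def)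
  have iT: "int T = K" using K1 by (simp add: T_def)
  have ie0: "int e0 = int r - 2 * i - 1" using ir by (simp add: e0_def)
  have DK: "0 \<le> (\<nu> - K - 1) * m" using K2' hm dd r by (intro mult_nonneg_nonneg) auto
  have iD: "int D = int \<delta> + 2 * i + (\<nu> - K - 1) * m" using DK i0 by (simp add: D_def)
  have "optimal_LRC q n r \<delta> (cyclic_code q n (setmult S.AA S.BB)) kk' D"
  proof (rule S.shape_opt)
    show "mm = r + \<delta> - 1" by (simp add: mm_def)
    show "r \<ge> 1" by (rule r)
    show "\<delta> \<ge> 2" by (rule \<delta>(1))
    show "2 * \<beta> + 1 = int \<delta> - 1" using bd by (simp add: d_def)
    show "int kk' = int n - (c + i - u + 2 * \<beta> + 1) - K * (2 * \<beta> + 1)"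
      unfolding ikk hn cu' bd hm using bd by (simp add: algebra_simps)
    show "kk' \<ge> 1" using ikk Kr ir by linarith
    show "T < nu" using iT K2' by (simp add: \<nu>_def)
    show "e0 \<le> mm" using ie0 i0 \<delta>(1) by (simp add: mm_def)
    have "int (T * r + e0) = int (kk' - 1)" using iT ie0 ikk Kr ir
      by (simp add: of_nat_diff algebra_simps)
    thus "T * r + e0 = kk' - 1" by (simp only: of_nat_eq_iff)
    have Km: "K * m \<le> (\<nu> - 1) * m" using K2' hm dd by (intro mult_right_mono) auto
    have "int (T * mm) + int e0 = K * m + (int r - 2 * i - 1)" using iT ie0 by (simp add: m_def)
    also have "\<dots> \<le> (\<nu> - 1) * m + m" using Km hm i0 dd by linarith
    also have "\<dots> = int n" using hn by (simp add: algebra_simps)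
    finally have "int (T * mm) + int e0 \<le> int n" .
    hence le: "T * mm + e0 \<le> n" by linarith
    have "int D = int n - (int T * m + int e0)"
      unfolding iD iT ie0 hn hm by (simp add: h algebra_simps d_def)
    hence "int D = int (n - (T * mm + e0))" using le by (simp add: m_def of_nat_diff)
    thus "D = n - (T * mm + e0)" by (simp only: of_nat_eq_iff)
    show "int D = c + i - u + 2 * \<beta> + 2" unfolding iD cu' using bd by (simp add: d_def)
    have ce: "\<lceil>real kk' / real r\<rceil> = K + 1"
      by (rule ceil_div_lemma[OF r ikk]) (use i0 ir in auto)
    show "int D = int n - int kk' - (\<lceil>real kk' / real r\<rceil> - 1) * (int \<delta> - 1) + 1"
      unfolding ce iD ikk hn hm by (simp add: d_def algebra_simps)
  qed
  hence "optimal_LRC q n r \<delta> (cyclic_code q n (setmult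
      (E ` ({j. u \<le> j \<and> j \<le> c + i} \<union> {c + e * int (r + \<delta> - 1) | e. 1 \<le> e \<and> e \<le> K}))
      (E ` {j. - ((int \<delta> - 2) div 2) \<le> j \<and> j \<le> (int \<delta> - 2) div 2}))) kk' D"
    by (simp only: AA BB)
  thus ?thesis by (simp only: kk'_def D_def m_def \<nu>_def nu_def mm_def)
qed

end

theorem corollary5p2:
  fixes q n r \<delta> :: nat and \<alpha> :: "'a::{field,finite}" and i :: int
  assumes q: "prime_power q" and card: "card (UNIV :: 'a set) = q ^ 2"
    and ndvd: "n dvd q + 1"
    and prim: "\<alpha> ^ n = 1" "\<forall>k. 0 < k \<and> k < n \<longrightarrow> \<alpha> ^ k \<noteq> 1"
    and r: "r \<ge> 1" and \<delta>: "\<delta> \<ge> 2" "even \<delta>"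
    and div: "(r + \<delta> - 1) dvd n"
    and i: "0 \<le> i" "i \<le> (int r - 1) div 2"
  defines "m \<equiv> int (r + \<delta> - 1)"
    and "\<nu> \<equiv> int (n div (r + \<delta> - 1))"
    and "B \<equiv> {\<alpha> powi j | j. - ((int \<delta> - 2) div 2) \<le> j \<and> j \<le> (int \<delta> - 2) div 2}"
  shows
    "(\<forall>l::int. 0 \<le> l \<and> l \<le> (\<nu> - 2) div 2 \<longrightarrow>
       (let A = {\<alpha> powi j | j. \<bar>j\<bar> \<le> l * m + i}
              \<union> {\<alpha> powi ((l + e) * m) | e. 1 \<le> e \<and> e \<le> \<nu> - 2 * l - 1}
        in optimal_LRC q n r \<delta> (cyclic_code q n (setmult A B))
             (nat ((\<nu> - 2 * l) * int r - 2 * i))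
             (nat (int \<delta> + 2 * i + 2 * l * m))))
   \<and> (even m \<longrightarrow>
      (\<forall>l::int. 0 \<le> l \<and> l \<le> (\<nu> - 3) div 2 \<longrightarrow>
       (let A = {\<alpha> powi j | j. \<bar>j\<bar> \<le> (2 * l + 1) * (m div 2) + i}
              \<union> {\<alpha> powi ((2 * l + 1 + 2 * e) * (m div 2)) | e. 1 \<le> e \<and> e \<le> \<nu> - 2 * l - 2}
        in optimal_LRC q n r \<delta> (cyclic_code q n (setmult A B))
             (nat ((\<nu> - 2 * l - 1) * int r - 2 * i))
             (nat (int \<delta> + 2 * i + (2 * l + 1) * m)))))
   \<and> (odd \<nu> \<longrightarrow>
      (\<forall>l::int. 1 \<le> l \<and> l \<le> (\<nu> - 3) div 2 \<longrightarrow>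
       (let A = {\<alpha> powi j | j. ((\<nu> - 1) div 2 - l) * m - i \<le> j \<and>
                                 j \<le> ((\<nu> + 1) div 2 + l) * m + i}
              \<union> {\<alpha> powi (((\<nu> + 1) div 2 + l + e) * m) | e. 1 \<le> e \<and> e \<le> \<nu> - 2 * l - 2}
        in optimal_LRC q n r \<delta> (cyclic_code q n (setmult A B))
             (nat ((\<nu> - 2 * l - 1) * int r - 2 * i))
             (nat (int \<delta> + 2 * i + (2 * l + 1) * m)))))"
proof -
  interpret F: fqs q n \<alpha> by unfold_locales (use q card ndvd prim in auto)
  have md: "m = int (r + \<delta> - 1)" using m_def by simp
  have nd: "\<nu> = int (n div (r + \<delta> - 1))" using \<nu>_def by simp
  have Bd: "B = (\<lambda>j. \<alpha> powi j) ` {j. - ((int \<delta> - 2) div 2) \<le> j \<and> j \<le> (int \<delta> - 2) div 2}"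
    unfolding B_def by auto
  have ir: "2 * i \<le> int r - 1"
  proof -
    have "int r - 1 = 2 * ((int r - 1) div 2) + (int r - 1) mod 2" by simp
    moreover have "(int r - 1) mod 2 \<ge> 0" by simp
    ultimately show ?thesis using i(2) by linarith
  qed
  have hn: "int n = \<nu> * m"
  proof -
    have "n = n div (r + \<delta> - 1) * (r + \<delta> - 1)" using div by simp
    hence "int n = int (n div (r + \<delta> - 1)) * int (r + \<delta> - 1)" by (metis of_nat_mult)
    thus ?thesis using md nd by simp
  qed
  have mpos: "m > 0" using md \<delta> by simp
  have gp: "optimal_LRC q n r \<delta> (cyclic_code q n (setmult
      ((\<lambda>j. \<alpha> powi j) ` ({j. u \<le> j \<and> j \<le> c + i} \<union> {c + e * m | e. 1 \<le> e \<and> e \<le> K})) B))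
      (nat ((K + 1) * int r - 2 * i)) (nat (int \<delta> + 2 * i + (\<nu> - K - 1) * m))"
    if "1 \<le> K" "K + 1 \<le> \<nu>" "(u + c + i) mod int n = 0" "(2 * c + (K + 1) * m) mod int n = 0"
      "u \<le> c + (K + 1 - \<nu>) * m" "c + i - u = (\<nu> - K - 1) * m + 2 * i" for u c K
    using that unfolding md nd Bd by (intro F.generic_part r \<delta> div i(1) ir)
  have setc: "{f j | j. P j} = f ` {j. P j}" for f :: "int \<Rightarrow> 'a" and P by auto
  have setc2: "{f (g e) | e. P e} = f ` {h e | e. P e}" if "\<And>e. g e = h e"
    for f :: "int \<Rightarrow> 'a" and g h :: "int \<Rightarrow> int" and P using that by auto
  have absI: "{j::int. \<bar>j\<bar> \<le> X} = {j. - X \<le> j \<and> j \<le> X}" for X by auto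
  have nmod: "(int n) mod int n = 0" "(2 * int n) mod int n = 0" by simp_all
  show ?thesis
  proof (intro conjI allI impI)
    fix l :: int assume l: "0 \<le> l \<and> l \<le> (\<nu> - 2) div 2"
    have l2: "2 * l \<le> \<nu> - 2"
    proof -
      have "2 * ((\<nu> - 2) div 2) + (\<nu> - 2) mod 2 = \<nu> - 2" by (rule mult_div_mod_eq)
      moreover have "(\<nu> - 2) mod 2 \<ge> 0" by simp
      ultimately show ?thesis using l by linarith
    qed
    have A: "{\<alpha> powi j | j. \<bar>j\<bar> \<le> l * m + i} \<union> {\<alpha> powi ((l + e) * m) | e. 1 \<le> e \<and> e \<le> \<nu> - 2 * l - 1}
        = (\<lambda>j. \<alpha> powi j) ` ({j. - (l * m + i) \<le> j \<and> j \<le> l * m + i} \<union> {l * m + e * m | e. 1 \<le> e \<and> e \<le> \<nu> - 2 * l - 1})"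
    proof -
      have X1: "{\<alpha> powi j | j. \<bar>j\<bar> \<le> l * m + i} = (\<lambda>j. \<alpha> powi j) ` {j. - (l * m + i) \<le> j \<and> j \<le> l * m + i}"
        by (auto simp: abs_le_iff)
      have X2: "{\<alpha> powi ((l + e) * m) | e. 1 \<le> e \<and> e \<le> \<nu> - 2 * l - 1}
          = (\<lambda>j. \<alpha> powi j) ` {l * m + e * m | e. 1 \<le> e \<and> e \<le> \<nu> - 2 * l - 1}"
        by (auto simp: algebra_simps)
      show ?thesis by (simp only: X1 X2 image_Un)
    qed
    have O: "optimal_LRC q n r \<delta> (cyclic_code q n (setmult
      ((\<lambda>j. \<alpha> powi j) ` ({j. - (l * m + i) \<le> j \<and> j \<le> l * m + i} \<union> {l * m + e * m | e. 1 \<le> e \<and> e \<le> \<nu> - 2 * l - 1})) B))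
      (nat ((\<nu> - 2 * l - 1 + 1) * int r - 2 * i)) (nat (int \<delta> + 2 * i + (\<nu> - (\<nu> - 2 * l - 1) - 1) * m))"
    proof (rule gp)
      show "1 \<le> \<nu> - 2 * l - 1" using l2 by linarith
      show "\<nu> - 2 * l - 1 + 1 \<le> \<nu>" using l by linarith
      show "(- (l * m + i) + l * m + i) mod int n = 0" by simp
      have "2 * (l * m) + (\<nu> - 2 * l - 1 + 1) * m = int n" using hn by (simp add: algebra_simps)
      thus "(2 * (l * m) + (\<nu> - 2 * l - 1 + 1) * m) mod int n = 0" by simp
      have "(\<nu> - 2 * l - 1 + 1 - \<nu>) * m = - 2 * (l * m)" by (simp add: algebra_simps)
      thus "- (l * m + i) \<le> l * m + (\<nu> - 2 * l - 1 + 1 - \<nu>) * m" using i(1) by linarith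
      show "l * m + i - - (l * m + i) = (\<nu> - (\<nu> - 2 * l - 1) - 1) * m + 2 * i" by (simp add: algebra_simps)
    qed
    have e1: "(\<nu> - 2 * l - 1 + 1) * int r - 2 * i = (\<nu> - 2 * l) * int r - 2 * i" by simp
    have e2: "int \<delta> + 2 * i + (\<nu> - (\<nu> - 2 * l - 1) - 1) * m = int \<delta> + 2 * i + 2 * l * m" by simp
    show "let A = {\<alpha> powi j | j. \<bar>j\<bar> \<le> l * m + i} \<union> {\<alpha> powi ((l + e) * m) | e. 1 \<le> e \<and> e \<le> \<nu> - 2 * l - 1}
        in optimal_LRC q n r \<delta> (cyclic_code q n (setmult A B))
             (nat ((\<nu> - 2 * l) * int r - 2 * i))
             (nat (int \<delta> + 2 * i + 2 * l * m))"
      unfolding Let_def A using O unfolding e1 e2 .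
  next
    assume me: "even m"
    obtain h2 where h2: "m = 2 * h2" using me by (elim evenE)
    have mh: "m div 2 = h2" using h2 by simp
    fix l :: int assume l: "0 \<le> l \<and> l \<le> (\<nu> - 3) div 2"
    have l2: "2 * l \<le> \<nu> - 3"
    proof -
      have "\<nu> - 3 = 2 * ((\<nu> - 3) div 2) + (\<nu> - 3) mod 2" by simp
      moreover have "(\<nu> - 3) mod 2 \<ge> 0" by simp
      ultimately show ?thesis using l by linarith
    qed
    have A: "{\<alpha> powi j | j. \<bar>j\<bar> \<le> (2 * l + 1) * (m div 2) + i}
          \<union> {\<alpha> powi ((2 * l + 1 + 2 * e) * (m div 2)) | e. 1 \<le> e \<and> e \<le> \<nu> - 2 * l - 2}
        = (\<lambda>j. \<alpha> powi j) ` ({j. - ((2 * l + 1) * h2 + i) \<le> j \<and> j \<le> (2 * l + 1) * h2 + i}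
            \<union> {(2 * l + 1) * h2 + e * m | e. 1 \<le> e \<and> e \<le> \<nu> - 2 * l - 2})"
    proof -
      have X1: "{\<alpha> powi j | j. \<bar>j\<bar> \<le> (2 * l + 1) * (m div 2) + i}
          = (\<lambda>j. \<alpha> powi j) ` {j. - ((2 * l + 1) * h2 + i) \<le> j \<and> j \<le> (2 * l + 1) * h2 + i}"
        by (auto simp: abs_le_iff mh)
      have X2: "{\<alpha> powi ((2 * l + 1 + 2 * e) * (m div 2)) | e. 1 \<le> e \<and> e \<le> \<nu> - 2 * l - 2}
          = (\<lambda>j. \<alpha> powi j) ` {(2 * l + 1) * h2 + e * m | e. 1 \<le> e \<and> e \<le> \<nu> - 2 * l - 2}"
        by (auto simp: algebra_simps mh h2)
      show ?thesis by (simp only: X1 X2 image_Un)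
    qed
    have O: "optimal_LRC q n r \<delta> (cyclic_code q n (setmult
      ((\<lambda>j. \<alpha> powi j) ` ({j. - ((2 * l + 1) * h2 + i) \<le> j \<and> j \<le> (2 * l + 1) * h2 + i}
            \<union> {(2 * l + 1) * h2 + e * m | e. 1 \<le> e \<and> e \<le> \<nu> - 2 * l - 2})) B))
      (nat ((\<nu> - 2 * l - 2 + 1) * int r - 2 * i)) (nat (int \<delta> + 2 * i + (\<nu> - (\<nu> - 2 * l - 2) - 1) * m))"
    proof (rule gp)
      show "1 \<le> \<nu> - 2 * l - 2" using l2 by linarith
      show "\<nu> - 2 * l - 2 + 1 \<le> \<nu>" using l by linarith
      show "(- ((2 * l + 1) * h2 + i) + (2 * l + 1) * h2 + i) mod int n = 0" by simp
      have "2 * ((2 * l + 1) * h2) + (\<nu> - 2 * l - 2 + 1) * m = int n" using hn h2 by (simp add: algebra_simps)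
      thus "(2 * ((2 * l + 1) * h2) + (\<nu> - 2 * l - 2 + 1) * m) mod int n = 0" by simp
      have "(\<nu> - 2 * l - 2 + 1 - \<nu>) * m = - 2 * ((2 * l + 1) * h2)" using h2 by (simp add: algebra_simps)
      thus "- ((2 * l + 1) * h2 + i) \<le> (2 * l + 1) * h2 + (\<nu> - 2 * l - 2 + 1 - \<nu>) * m" using i(1) by linarith
      show "(2 * l + 1) * h2 + i - - ((2 * l + 1) * h2 + i) = (\<nu> - (\<nu> - 2 * l - 2) - 1) * m + 2 * i"
        using h2 by (simp add: algebra_simps)
    qed
    have e1: "(\<nu> - 2 * l - 2 + 1) * int r - 2 * i = (\<nu> - 2 * l - 1) * int r - 2 * i" by simp
    have e2: "int \<delta> + 2 * i + (\<nu> - (\<nu> - 2 * l - 2) - 1) * m = int \<delta> + 2 * i + (2 * l + 1) * m" by simp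
    show "let A = {\<alpha> powi j | j. \<bar>j\<bar> \<le> (2 * l + 1) * (m div 2) + i}
              \<union> {\<alpha> powi ((2 * l + 1 + 2 * e) * (m div 2)) | e. 1 \<le> e \<and> e \<le> \<nu> - 2 * l - 2}
        in optimal_LRC q n r \<delta> (cyclic_code q n (setmult A B))
             (nat ((\<nu> - 2 * l - 1) * int r - 2 * i))
             (nat (int \<delta> + 2 * i + (2 * l + 1) * m))"
      unfolding Let_def A using O unfolding e1 e2 .
  next
    assume no: "odd \<nu>"
    obtain p where p: "\<nu> = 2 * p + 1" using no by (elim oddE)
    have p1: "(\<nu> - 1) div 2 = p" "(\<nu> + 1) div 2 = p + 1" using p by simp_all
    fix l :: int assume l: "1 \<le> l \<and> l \<le> (\<nu> - 3) div 2"
    have l2: "2 * l \<le> \<nu> - 3"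
    proof -
      have "\<nu> - 3 = 2 * ((\<nu> - 3) div 2) + (\<nu> - 3) mod 2" by simp
      moreover have "(\<nu> - 3) mod 2 \<ge> 0" by simp
      ultimately show ?thesis using l by linarith
    qed
    have A: "{\<alpha> powi j | j. ((\<nu> - 1) div 2 - l) * m - i \<le> j \<and> j \<le> ((\<nu> + 1) div 2 + l) * m + i}
          \<union> {\<alpha> powi (((\<nu> + 1) div 2 + l + e) * m) | e. 1 \<le> e \<and> e \<le> \<nu> - 2 * l - 2}
        = (\<lambda>j. \<alpha> powi j) ` ({j. (p - l) * m - i \<le> j \<and> j \<le> (p + 1 + l) * m + i}
            \<union> {(p + 1 + l) * m + e * m | e. 1 \<le> e \<and> e \<le> \<nu> - 2 * l - 2})"
    proof -
      have X1: "{\<alpha> powi j | j. ((\<nu> - 1) div 2 - l) * m - i \<le> j \<and> j \<le> ((\<nu> + 1) div 2 + l) * m + i}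
          = (\<lambda>j. \<alpha> powi j) ` {j. (p - l) * m - i \<le> j \<and> j \<le> (p + 1 + l) * m + i}"
        unfolding p1 by auto
      have X2: "{\<alpha> powi (((\<nu> + 1) div 2 + l + e) * m) | e. 1 \<le> e \<and> e \<le> \<nu> - 2 * l - 2}
          = (\<lambda>j. \<alpha> powi j) ` {(p + 1 + l) * m + e * m | e. 1 \<le> e \<and> e \<le> \<nu> - 2 * l - 2}"
        unfolding p1 by (auto simp: algebra_simps)
      show ?thesis by (simp only: X1 X2 image_Un)
    qed
    have O: "optimal_LRC q n r \<delta> (cyclic_code q n (setmult
      ((\<lambda>j. \<alpha> powi j) ` ({j. (p - l) * m - i \<le> j \<and> j \<le> (p + 1 + l) * m + i}
            \<union> {(p + 1 + l) * m + e * m | e. 1 \<le> e \<and> e \<le> \<nu> - 2 * l - 2})) B))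
      (nat ((\<nu> - 2 * l - 2 + 1) * int r - 2 * i)) (nat (int \<delta> + 2 * i + (\<nu> - (\<nu> - 2 * l - 2) - 1) * m))"
    proof (rule gp)
      show "1 \<le> \<nu> - 2 * l - 2" using l2 by linarith
      show "\<nu> - 2 * l - 2 + 1 \<le> \<nu>" using l by linarith
      have "(p - l) * m - i + (p + 1 + l) * m + i = int n" using hn p by (simp add: algebra_simps)
      thus "((p - l) * m - i + (p + 1 + l) * m + i) mod int n = 0" by simp
      have "2 * ((p + 1 + l) * m) + (\<nu> - 2 * l - 2 + 1) * m = 2 * int n" using hn p by (simp add: algebra_simps)
      thus "(2 * ((p + 1 + l) * m) + (\<nu> - 2 * l - 2 + 1) * m) mod int n = 0" by simp
      have "(p + 1 + l) * m + (\<nu> - 2 * l - 2 + 1 - \<nu>) * m = (p - l) * m" using p by (simp add: algebra_simps)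
      thus "(p - l) * m - i \<le> (p + 1 + l) * m + (\<nu> - 2 * l - 2 + 1 - \<nu>) * m" using i(1) by linarith
      show "(p + 1 + l) * m + i - ((p - l) * m - i) = (\<nu> - (\<nu> - 2 * l - 2) - 1) * m + 2 * i"
        using p by (simp add: algebra_simps)
    qed
    have e1: "(\<nu> - 2 * l - 2 + 1) * int r - 2 * i = (\<nu> - 2 * l - 1) * int r - 2 * i" by simp
    have e2: "int \<delta> + 2 * i + (\<nu> - (\<nu> - 2 * l - 2) - 1) * m = int \<delta> + 2 * i + (2 * l + 1) * m" by simp
    show "let A = {\<alpha> powi j | j. ((\<nu> - 1) div 2 - l) * m - i \<le> j \<and>
                                 j \<le> ((\<nu> + 1) div 2 + l) * m + i}
              \<union> {\<alpha> powi (((\<nu> + 1) div 2 + l + e) * m) | e. 1 \<le> e \<and> e \<le> \<nu> - 2 * l - 2}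
        in optimal_LRC q n r \<delta> (cyclic_code q n (setmult A B))
             (nat ((\<nu> - 2 * l - 1) * int r - 2 * i))
             (nat (int \<delta> + 2 * i + (2 * l + 1) * m))"
      unfolding Let_def A using O unfolding e1 e2 .
  qed
qed


end
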